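(* Let $P$ be a maximal ranked poset. Then $|\Delta^{*}_{\mathcal O(P)}|\le|\Delta^{*}_{\mathcal C(P)}|$.
   Context: For a finite poset $P=\{p_1,\dots,p_d\}$ and $W\subset P$ put $\rho(W)=\sum_{p_i\in W}\mathbf e_i\in\mathbb R^d$ ($\rho(\emptyset)=0$). The order polytope is $\mathcal O(P)=\{x\in\mathbb R^d: 0\le x_i\le 1 \text{ for all } i,\ x_i\ge x_j \text{ if } p_i\le p_j\}$ and the chain polytope is $\mathcal C(P)=\{x\in\mathbb R^d: x_i\ge 0 \text{ for all } i,\ x_{i_1}+\dots+x_{i_k}\le 1 \text{ if } p_{i_1}<\dots<p_{i_k}\}$. Poset ideals and antichains include $\emptyset$. For a poset ideal $I$, $\max(I)$ is its set of maximal elements; for an antichain $A$, $\langle A\rangle=\{x: x\le p \text{ for some } p\in A\}$. $E^{*}_{\mathcal O(P)}$ is the set of pairs $\{I,J\}$ of distinct poset ideals such that $\mathrm{conv}\{\rho(I),\rho(J)\}$ is an edge of $\mathcal O(P)$ but $\mathrm{conv}\{\rho(\max I),\rho(\max J)\}$ is not an edge of $\mathcal C(P)$. $E^{*}_{\mathcal C(P)}$ is the set of pairs $\{A,B\}$ of distinct antichains such that $\mathrm{conv}\{\rho(A),\rho(B)\}$ is an edge of $\mathcal C(P)$ but $\mathrm{conv}\{\rho(\langle A\rangle),\rho(\langle B\rangle)\}$ is not an edge of $\mathcal O(P)$. $\Delta_{\mathcal O(P)}$ is the set of triples $\{I,J,K\}$ of pairwise distinct poset ideals such that $\mathrm{conv}\{\rho(I),\rho(J),\rho(K)\}$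 is a 2-face of $\mathcal O(P)$; $\Delta_{\mathcal C(P)}$ is the set of triples $\{A,B,C\}$ of pairwise distinct antichains such that $\mathrm{conv}\{\rho(A),\rho(B),\rho(C)\}$ is a 2-face of $\mathcal C(P)$. $\Delta^{*}_{\mathcal O(P)}$ consists of those $\{I,J,K\}\in\Delta_{\mathcal O(P)}$ for which at least one of $\{I,J\},\{J,K\},\{I,K\}$ lies in $E^{*}_{\mathcal O(P)}$; $\Delta^{*}_{\mathcal C(P)}$ consists of those $\{A,B,C\}\in\Delta_{\mathcal C(P)}$ for which at least one of $\{A,B\},\{B,C\},\{A,C\}$ lies in $E^{*}_{\mathcal C(P)}$. The length of a chain $C$ is $|C|-1$; $P$ is graded of rank $n$ if every maximal chain has length $n$, and then $P=\bigcup_{i=0}^n P_i$ where every maximal chain is $p_0<\dots<p_n$ with $p_i\in P_i$. $P$ is a maximal ranked poset if it is graded and any two elements of distinct ranks are comparable. *)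

theory Defs
  imports "HOL-Analysis.Analysis"
begin

text \<open>A finite poset is a finite type 'n of class order; points of R^d are real^'n.\<close>

definition poset_ideal :: "'n::order set \<Rightarrow> bool" where
  "poset_ideal I \<longleftrightarrow> (\<forall>x y. x \<in> I \<longrightarrow> y \<le> x \<longrightarrow> y \<in> I)"

definition poset_antichain :: "'n::order set \<Rightarrow> bool" where
  "poset_antichain A \<longleftrightarrow> (\<forall>x\<in>A. \<forall>y\<in>A. x \<le> y \<longrightarrow> x = y)"

definition poset_chain :: "'n::order set \<Rightarrow> bool" where
  "poset_chain C \<longleftrightarrow> (\<forall>x\<in>C. \<forall>y\<in>C. x \<le> y \<or> y \<le> x)"

definition maximal_chain :: "'n::order set \<Rightarrow> bool" where
  "maximal_chain C \<longleftrightarrow> poset_chain C \<and> (\<forall>D. poset_chain D \<and> C \<subseteq> D \<longrightarrow> D = C)"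

definition maxs :: "'n::order set \<Rightarrow> 'n set" where
  "maxs I = {x \<in> I. \<forall>y\<in>I. x \<le> y \<longrightarrow> y = x}"

definition down_closure :: "'n::order set \<Rightarrow> 'n set" where
  "down_closure A = {x. \<exists>p\<in>A. x \<le> p}"

definition rho :: "'n::finite set \<Rightarrow> real^'n" where
  "rho W = (\<chi> i. if i \<in> W then 1 else 0)"

definition order_polytope :: "(real^'n::{finite,order}) set" where
  "order_polytope = {x. (\<forall>i. 0 \<le> x$i \<and> x$i \<le> 1) \<and> (\<forall>i j. i \<le> j \<longrightarrow> x$j \<le> x$i)}"

definition chain_polytope :: "(real^'n::{finite,order}) set" where
  "chain_polytope = {x. (\<forall>i. 0 \<le> x$i) \<and> (\<forall>C. poset_chain C \<longrightarrow> (\<Sum>i\<in>C. x$i) \<le> 1)}"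

definition is_k_face :: "'a::euclidean_space set \<Rightarrow> int \<Rightarrow> 'a set \<Rightarrow> bool" where
  "is_k_face S k F \<longleftrightarrow> F face_of S \<and> aff_dim F = k"

definition Estar_O :: "'n::{finite,order} set set set" where
  "Estar_O = {{I, J} | I J. poset_ideal I \<and> poset_ideal J \<and> I \<noteq> J \<and>
      is_k_face (order_polytope :: (real^'n::{finite,order}) set) 1 (convex hull {rho I, rho J}) \<and>
      \<not> is_k_face (chain_polytope :: (real^'n::{finite,order}) set) 1 (convex hull {rho (maxs I), rho (maxs J)})}"

definition Estar_C :: "'n::{finite,order} set set set" where
  "Estar_C = {{A, B} | A B. poset_antichain A \<and> poset_antichain B \<and> A \<noteq> B \<and>
      is_k_face (chain_polytope :: (real^'n::{finite,order}) set) 1 (convex hull {rho A, rho B}) \<and>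
      \<not> is_k_face (order_polytope :: (real^'n::{finite,order}) set) 1
          (convex hull {rho (down_closure A), rho (down_closure B)})}"

definition Delta_O :: "'n::{finite,order} set set set" where
  "Delta_O = {{I, J, K} | I J K. poset_ideal I \<and> poset_ideal J \<and> poset_ideal K \<and>
      I \<noteq> J \<and> J \<noteq> K \<and> I \<noteq> K \<and>
      is_k_face (order_polytope :: (real^'n::{finite,order}) set) 2 (convex hull {rho I, rho J, rho K})}"

definition Delta_C :: "'n::{finite,order} set set set" where
  "Delta_C = {{A, B, C} | A B C. poset_antichain A \<and> poset_antichain B \<and> poset_antichain C \<and>
      A \<noteq> B \<and> B \<noteq> C \<and> A \<noteq> C \<and>
      is_k_face (chain_polytope :: (real^'n::{finite,order}) set) 2 (convex hull {rho A, rho B, rho C})}"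

definition Deltastar_O :: "'n::{finite,order} set set set" where
  "Deltastar_O = {T \<in> Delta_O. \<exists>I\<in>T. \<exists>J\<in>T. I \<noteq> J \<and> {I, J} \<in> Estar_O}"

definition Deltastar_C :: "'n::{finite,order} set set set" where
  "Deltastar_C = {T \<in> Delta_C. \<exists>A\<in>T. \<exists>B\<in>T. A \<noteq> B \<and> {A, B} \<in> Estar_C}"

text \<open>The rank of x is the length of the longest chain with top element x; in a graded
  poset x lies in P_i exactly when its rank is i.\<close>
definition graded :: "'n::{finite,order} itself \<Rightarrow> nat \<Rightarrow> bool" where
  "graded _ n \<longleftrightarrow> (\<forall>C::'n set. maximal_chain C \<longrightarrow> card C = n + 1)"

definition poset_rank :: "'n::{finite,order} \<Rightarrow> nat" where
  "poset_rank x = Max {card C - 1 | C. poset_chain C \<and> x \<in> C \<and> (\<forall>y\<in>C. y \<le> x)}"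

definition maximal_ranked :: "'n::{finite,order} itself \<Rightarrow> bool" where
  "maximal_ranked T \<longleftrightarrow> (\<exists>n. graded T n) \<and>
     (\<forall>x y::'n. poset_rank x \<noteq> poset_rank y \<longrightarrow> x \<le> y \<or> y \<le> x)"

end

theory Submission
  imports Defs
begin

lemma rank_set_fin: "finite {card C - 1 | C::'n::{finite,order} set. poset_chain C \<and> x \<in> C \<and> (\<forall>y\<in>C. y \<le> x)}"
  by (rule finite_image_set) simp

lemma rank_ge:
  fixes x :: "'n::{finite,order}"
  assumes "poset_chain C" "x \<in> C" "\<forall>y\<in>C. y \<le> x"
  shows "card C - 1 \<le> poset_rank x"
  unfolding poset_rank_def using assms by (intro Max_ge[OF rank_set_fin]) auto

lemma rank_ex:
  fixes x :: "'n::{finite,order}"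
  shows "\<exists>C. poset_chain C \<and> x \<in> C \<and> (\<forall>y\<in>C. y \<le> x) \<and> card C = poset_rank x + 1"
proof -
  let ?S = "{card C - 1 | C::'n set. poset_chain C \<and> x \<in> C \<and> (\<forall>y\<in>C. y \<le> x)}"
  have ne: "?S \<noteq> {}" 
    by (rule ccontr) (auto simp: poset_chain_def dest: spec[of _ "{x}"])
  have "poset_rank x \<in> ?S" unfolding poset_rank_def using ne by (intro Max_in[OF rank_set_fin])
  then obtain C where C: "poset_chain C" "x \<in> C" "\<forall>y\<in>C. y \<le> x" "poset_rank x = card C - 1" by auto
  have "card C \<ge> 1" using C(2) by (metis One_nat_def Suc_leI card_gt_0_iff empty_iff finite)
  thus ?thesis using C by (intro exI[of _ C]) auto
qed

lemma rank_mono: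
  fixes x y :: "'n::{finite,order}"
  assumes "x < y" shows "poset_rank x < poset_rank y"
proof -
  obtain C where C: "poset_chain C" "x \<in> C" "\<forall>z\<in>C. z \<le> x" "card C = poset_rank x + 1"
    using rank_ex by blast
  have yn: "y \<notin> C" using C(3) assms by (meson less_le_not_le)
  have ch: "poset_chain (insert y C)" unfolding poset_chain_def
  proof (intro ballI)
    fix a b assume "a \<in> insert y C" "b \<in> insert y C"
    moreover have "\<forall>z\<in>C. z \<le> y" using C(3) assms by (auto intro: order_trans less_imp_le)
    ultimately show "a \<le> b \<or> b \<le> a" using C(1) unfolding poset_chain_def by auto
  qed
  have "card (insert y C) - 1 \<le> poset_rank y"
    using C(3) assms by (intro rank_ge[OF ch]) (auto intro: order_trans less_imp_le)
  moreover have "card (insert y C) = card C + 1" using yn by simp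
  ultimately show ?thesis using C(4) by simp
qed

lemma rank_contig:
  fixes x :: "'n::{finite,order}"
  assumes "poset_rank x > 0" shows "\<exists>y::'n. poset_rank y = poset_rank x - 1"
proof -
  obtain C where C: "poset_chain C" "x \<in> C" "\<forall>z\<in>C. z \<le> x" "card C = poset_rank x + 1"
    using rank_ex by blast
  let ?D = "C - {x}"
  have "card ?D = poset_rank x" using C by simp
  hence ne: "?D \<noteq> {}" using assms by (metis card.empty less_irrefl)
  have "Max (poset_rank ` ?D) \<in> poset_rank ` ?D" using ne by (intro Max_in) auto
  then obtain y where y1: "y \<in> ?D" "poset_rank y = Max (poset_rank ` ?D)"
    by (metis (no_types, lifting) imageE)
  have y: "y \<in> ?D" "\<forall>z\<in>?D. poset_rank z \<le> poset_rank y"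
    using y1 by (auto intro: Max_ge)
  have yx: "y < x" using y(1) C(3) by auto
  have Dch: "poset_chain ?D" using C(1) unfolding poset_chain_def by auto
  have top: "\<forall>z\<in>?D. z \<le> y"
  proof
    fix z assume z: "z \<in> ?D"
    have "z \<le> y \<or> y \<le> z" using Dch z y(1) unfolding poset_chain_def by blast
    moreover have "\<not> y < z" using y(2) z rank_mono by (meson not_le)
    ultimately show "z \<le> y" by (metis order.order_iff_strict)
  qed
  have "card ?D - 1 \<le> poset_rank y" by (rule rank_ge[OF Dch y(1) top])
  moreover have "poset_rank y < poset_rank x" using rank_mono[OF yx] .
  ultimately have "poset_rank y = poset_rank x - 1" using \<open>card ?D = poset_rank x\<close> by linarith
  thus ?thesis by blast
qed

lemma mr_less_iff:
  assumes "maximal_ranked TYPE('n::{finite,order})"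
  shows "(x::'n) < y \<longleftrightarrow> poset_rank x < poset_rank y"
proof
  assume "x < y" thus "poset_rank x < poset_rank y" by (rule rank_mono)
next
  assume h: "poset_rank x < poset_rank y"
  hence "x \<le> y \<or> y \<le> x" using assms unfolding maximal_ranked_def by auto
  moreover have "\<not> y \<le> x" using h rank_mono by (metis leD le_less)
  ultimately show "x < y" using h by (metis less_le less_not_refl)
qed

lemma rho_nth: "rho W $ i = (if i \<in> W then 1 else 0)"
  by (simp add: rho_def)

lemma rho_inj: "rho A = rho B \<Longrightarrow> A = B"
  by (auto simp: vec_eq_iff rho_nth split: if_splits)

lemma rho_in_hull:
  fixes W :: "'n::finite set"
  assumes "finite SS" "rho W \<in> convex hull (rho ` SS)"
  shows "W \<in> SS"
proof (rule ccontr)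
  assume nW: "W \<notin> SS"
  define a :: "real^'n" where "a = (\<chi> i. if i \<in> W then 1 else -1)"
  have ax: "inner a (rho S) = (\<Sum>i\<in>UNIV. (if i \<in> W then (if i \<in> S then 1 else 0) else (if i \<in> S then -1 else 0)))" for S
    unfolding inner_vec_def a_def rho_def by (intro sum.cong) auto
  have le: "inner a (rho S) \<le> real (card W) - 1" if "S \<in> SS" for S
  proof -
    have "S \<noteq> W" using that nW by auto
    then obtain i0 where i0: "(i0 \<in> S) \<noteq> (i0 \<in> W)" by blast
    have "inner a (rho S) \<le> (\<Sum>i\<in>UNIV. (if i \<in> W then 1 else 0) - (if i = i0 then 1 else 0))"
      unfolding ax by (intro sum_mono) (use i0 in auto)
    also have "\<dots> = real (card W) - 1"
      by (simp add: sum_subtractf sum.If_cases)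
    finally show ?thesis .
  qed
  have "convex hull (rho ` SS) \<subseteq> {x. inner a x \<le> real (card W) - 1}"
    by (rule hull_minimal) (use le convex_halfspace_le in auto)
  moreover have "inner a (rho W) = real (card W)"
    unfolding ax by (simp add: sum.If_cases)
  ultimately show False using assms(2) by force
qed

lemma face_mid:
  assumes "F face_of Q" "a \<in> Q" "b \<in> Q" "midpoint a b \<in> F"
  shows "a \<in> F"
proof (cases "a = b")
  case True thus ?thesis using assms by simp
next
  case False
  hence "midpoint a b \<in> open_segment a b" by simp
  thus ?thesis using face_ofD[OF assms(1) _ assms(2,3,4)] by blast
qed

lemma rho_ideal_in: "poset_ideal I \<Longrightarrow> rho I \<in> order_polytope"
  unfolding order_polytope_def poset_ideal_def by (auto simp: rho_nth)

lemma antichain_chain_card: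
  fixes A C :: "'n::{finite,order} set"
  assumes "poset_antichain A" "poset_chain C"
  shows "card (C \<inter> A) \<le> 1"
proof -
  have "\<forall>x\<in>C \<inter> A. \<forall>y\<in>C \<inter> A. x = y"
    using assms unfolding poset_antichain_def poset_chain_def by (metis IntE order.antisym)
  thus ?thesis by (metis card_le_Suc0_iff_eq finite One_nat_def)
qed

lemma rho_anti_in:
  fixes A :: "'n::{finite,order} set"
  assumes "poset_antichain A" shows "rho A \<in> chain_polytope"
proof -
  have "(\<Sum>i\<in>C. rho A $ i) \<le> 1" if "poset_chain C" for C
  proof -
    have "(\<Sum>i\<in>C. rho A $ i) = real (card (C \<inter> A))"
      by (simp add: rho_nth sum.If_cases)
    thus ?thesis using antichain_chain_card[OF assms that] by simp
  qed
  thus ?thesis unfolding chain_polytope_def by (auto simp: rho_nth)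
qed

lemma convex_order_polytope: "convex order_polytope"
  unfolding order_polytope_def convex_def
proof (safe)
  fix x y :: "real^'a::{finite,order}" and u v :: real and i j :: 'a
  assume h: "\<forall>i. 0 \<le> x $ i \<and> x $ i \<le> 1" "\<forall>i j. i \<le> j \<longrightarrow> x $ j \<le> x $ i"
    "\<forall>i. 0 \<le> y $ i \<and> y $ i \<le> 1" "\<forall>i j. i \<le> j \<longrightarrow> y $ j \<le> y $ i"
    "0 \<le> u" "0 \<le> v" "u + v = 1"
  show "0 \<le> (u *\<^sub>R x + v *\<^sub>R y) $ i" using h by simp
  have "u * x $ i + v * y $ i \<le> u * 1 + v * 1"
    using h by (intro add_mono mult_left_mono) auto
  thus "(u *\<^sub>R x + v *\<^sub>R y) $ i \<le> 1" using h by simp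
  assume "i \<le> j"
  thus "(u *\<^sub>R x + v *\<^sub>R y) $ j \<le> (u *\<^sub>R x + v *\<^sub>R y) $ i"
    using h by (simp add: add_mono mult_left_mono)
qed

lemma convex_chain_polytope: "convex chain_polytope"
  unfolding chain_polytope_def convex_def
proof (safe)
  fix x y :: "real^'a::{finite,order}" and u v :: real and i :: 'a and C :: "'a set"
  assume h: "\<forall>i. 0 \<le> x $ i" "\<forall>C. poset_chain C \<longrightarrow> (\<Sum>i\<in>C. x $ i) \<le> 1"
    "\<forall>i. 0 \<le> y $ i" "\<forall>C. poset_chain C \<longrightarrow> (\<Sum>i\<in>C. y $ i) \<le> 1"
    "0 \<le> u" "0 \<le> v" "u + v = 1"
  show "0 \<le> (u *\<^sub>R x + v *\<^sub>R y) $ i" using h by simp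
  assume c: "poset_chain C"
  have "(\<Sum>i\<in>C. (u *\<^sub>R x + v *\<^sub>R y) $ i) = u * (\<Sum>i\<in>C. x $ i) + v * (\<Sum>i\<in>C. y $ i)"
    by (simp add: sum.distrib sum_distrib_left)
  also have "\<dots> \<le> u * 1 + v * 1"
    using h c by (intro add_mono mult_left_mono) auto
  finally show "(\<Sum>i\<in>C. (u *\<^sub>R x + v *\<^sub>R y) $ i) \<le> 1" using h by simp
qed

lemma O_split:
  fixes TT :: "'n::{finite,order} set set"
  assumes F: "convex hull (rho ` TT) face_of order_polytope" and fin: "finite TT"
    and I: "I \<in> TT" and J: "J \<in> TT" and D: "poset_ideal D1" "poset_ideal D2"
    and un: "D1 \<union> D2 = I \<union> J" and it: "D1 \<inter> D2 = I \<inter> J"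
  shows "D1 \<in> TT"
proof -
  have eq: "rho D1 + rho D2 = rho I + rho J"
  proof -
    have "\<And>i. (if i \<in> D1 then 1 else 0) + (if i \<in> D2 then 1 else 0) =
       (if i \<in> I then 1 else 0) + (if i \<in> J then (1::real) else 0)"
    proof -
      fix i
      have "(i \<in> D1 \<or> i \<in> D2) = (i \<in> I \<or> i \<in> J)" "(i \<in> D1 \<and> i \<in> D2) = (i \<in> I \<and> i \<in> J)"
        using un it by blast+
      thus "?thesis i" by (auto split: if_splits)
    qed
    thus ?thesis by (simp add: vec_eq_iff rho_nth)
  qed
  have m: "midpoint (rho I) (rho J) = (1/2) *\<^sub>R rho I + (1/2) *\<^sub>R rho J"
    by (simp add: midpoint_def scaleR_add_right)
  have "midpoint (rho I) (rho J) \<in> convex hull (rho ` TT)"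
    unfolding m using I J by (intro convexD[OF convex_convex_hull] hull_inc) auto
  hence "midpoint (rho D1) (rho D2) \<in> convex hull (rho ` TT)"
    by (simp add: midpoint_def eq)
  hence "rho D1 \<in> convex hull (rho ` TT)"
    by (rule face_mid[OF F rho_ideal_in[OF D(1)] rho_ideal_in[OF D(2)]])
  thus ?thesis using rho_in_hull fin by blast
qed

lemma C_tight_face:
  fixes Z :: "'n::{finite,order} set" and Ch :: "'n set set"
  assumes ch: "\<forall>c\<in>Ch. poset_chain c"
  shows "{x \<in> chain_polytope. (\<forall>i\<in>Z. x$i = 0) \<and> (\<forall>c\<in>Ch. (\<Sum>i\<in>c. x$i) = 1)} face_of chain_polytope"
    (is "?F face_of _")
proof -
  have sumlin: "(\<Sum>i\<in>c. ((1 - u) *\<^sub>R a + u *\<^sub>R b) $ i) = (1 - u) * (\<Sum>i\<in>c. a$i) + u * (\<Sum>i\<in>c. b$i)"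
    for c :: "'n::{finite,order} set" and u :: real and a b :: "real^'n::{finite,order}"
    by (simp add: sum.distrib sum_distrib_left)
  have cvx: "convex ?F"
    unfolding convex_alt
  proof (intro ballI allI impI)
    fix x y :: "real^'n::{finite,order}" and u :: real
    assume x: "x \<in> ?F" and y: "y \<in> ?F" and u: "0 \<le> u \<and> u \<le> 1"
    have "(1 - u) *\<^sub>R x + u *\<^sub>R y \<in> chain_polytope"
      using convexD_alt[OF convex_chain_polytope] x y u by auto
    moreover have "\<forall>i\<in>Z. ((1 - u) *\<^sub>R x + u *\<^sub>R y) $ i = 0" using x y by auto
    moreover have "\<forall>c\<in>Ch. (\<Sum>i\<in>c. ((1 - u) *\<^sub>R x + u *\<^sub>R y) $ i) = 1"
    proof
      fix c assume c: "c \<in> Ch"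
      show "(\<Sum>i\<in>c. ((1 - u) *\<^sub>R x + u *\<^sub>R y) $ i) = 1"
        unfolding sumlin using x y c by simp
    qed
    ultimately show "(1 - u) *\<^sub>R x + u *\<^sub>R y \<in> ?F" by blast
  qed
  show ?thesis unfolding face_of_def
  proof (intro conjI cvx)
    show "?F \<subseteq> chain_polytope" by blast
  next
    show "\<forall>a\<in>chain_polytope. \<forall>b\<in>chain_polytope. \<forall>x\<in>?F. x \<in> open_segment a b \<longrightarrow> a \<in> ?F \<and> b \<in> ?F"
    proof (intro ballI impI)
    fix a b x assume a: "a \<in> chain_polytope" and b: "b \<in> chain_polytope" and x: "x \<in> ?F"
      and seg: "x \<in> open_segment a b"
    then obtain u where u: "0 < u" "u < 1" "x = (1 - u) *\<^sub>R a + u *\<^sub>R b"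
      by (auto simp: in_segment)
    have a0: "\<forall>i. 0 \<le> a$i" and b0: "\<forall>i. 0 \<le> b$i" using a b by (auto simp: chain_polytope_def)
    have ac: "(\<Sum>i\<in>c. a$i) \<le> 1" and bc: "(\<Sum>i\<in>c. b$i) \<le> 1" if "c \<in> Ch" for c
      using a b ch that by (auto simp: chain_polytope_def)
    have z: "a$i = 0 \<and> b$i = 0" if "i \<in> Z" for i
    proof -
      have "(1 - u) * a$i + u * b$i = 0" using x that u by auto
      moreover have "(1 - u) * a$i \<ge> 0" "u * b$i \<ge> 0" using a0 b0 u by auto
      ultimately have "(1 - u) * a$i = 0" "u * b$i = 0" by linarith+
      thus ?thesis using u by auto
    qed
    have s: "(\<Sum>i\<in>c. a$i) = 1 \<and> (\<Sum>i\<in>c. b$i) = 1" if "c \<in> Ch" for c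
    proof -
      define p where "p = (\<Sum>i\<in>c. a$i)"
      define q where "q = (\<Sum>i\<in>c. b$i)"
      have e: "(1 - u) * p + u * q = 1"
        using x that u unfolding p_def q_def sumlin[symmetric] by simp
      have "p \<le> 1" "q \<le> 1" using ac[OF that] bc[OF that] p_def q_def by auto
      hence "(1 - u) * p \<le> (1 - u) * 1" "u * q \<le> u * 1" using u
        by (intro mult_left_mono; simp)+
      hence h: "(1 - u) * p \<le> (1 - u)" "u * q \<le> u" by simp_all
      have "(1 - u) * p = (1 - u)" using h e by linarith
      moreover have "u * q = u" using h e by linarith
      ultimately have "p = 1" "q = 1" using u by auto
      thus ?thesis using p_def q_def by simp
    qed
    show "a \<in> ?F \<and> b \<in> ?F" using a b z s by blast
  qed
  qed
qed

lemma C_face_hull: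
  fixes Z :: "'n::{finite,order} set" and Ch :: "'n set set" and V :: "(real^'n::{finite,order}) set"
  assumes ch: "\<forall>c\<in>Ch. poset_chain c"
    and V: "\<forall>v\<in>V. v \<in> chain_polytope \<and> (\<forall>i\<in>Z. v$i = 0) \<and> (\<forall>c\<in>Ch. (\<Sum>i\<in>c. v$i) = 1)"
    and H: "\<And>x. x \<in> chain_polytope \<Longrightarrow> \<forall>i\<in>Z. x$i = 0 \<Longrightarrow> \<forall>c\<in>Ch. (\<Sum>i\<in>c. x$i) = 1 \<Longrightarrow> x \<in> convex hull V"
  shows "convex hull V face_of chain_polytope"
proof -
  let ?F = "{x \<in> chain_polytope. (\<forall>i\<in>Z. x$i = 0) \<and> (\<forall>c\<in>Ch. (\<Sum>i\<in>c. x$i) = 1)}"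
  have f: "?F face_of chain_polytope" by (rule C_tight_face[OF ch])
  have "convex hull V \<subseteq> ?F"
    by (rule hull_minimal) (use V face_of_imp_convex[OF f] in auto)
  moreover have "?F \<subseteq> convex hull V" using H by blast
  ultimately have "convex hull V = ?F" by blast
  thus ?thesis using f by simp
qed

lemma aff_dim_2:
  fixes A B :: "'a::finite set"
  assumes "A \<noteq> B" shows "aff_dim (convex hull {rho A, rho B}) = 1"
proof -
  have "rho A \<noteq> rho B" using assms rho_inj by blast
  thus ?thesis using aff_dim_affine_independent[OF affine_independent_2[of "rho A" "rho B"]]
    by (simp add: aff_dim_convex_hull)
qed

lemma not_collinear_rho:
  fixes A B C :: "'a::finite set"
  assumes "A \<noteq> B" "A \<noteq> C" "B \<noteq> C"
  shows "\<not> collinear {rho A, rho B, rho C}"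
proof
  assume "collinear {rho A, rho B, rho C}"
  hence "collinear {0, rho A - rho B, rho C - rho B}" by (subst (asm) collinear_3) auto
  moreover have "rho A - rho B \<noteq> 0" "rho C - rho B \<noteq> 0" using assms rho_inj by auto
  ultimately obtain c where c: "rho C - rho B = c *\<^sub>R (rho A - rho B)"
    unfolding collinear_lemma by blast
  obtain i where i: "(i \<in> A) \<noteq> (i \<in> B)" using assms(1) by blast
  have ci: "(if i \<in> C then 1 else 0) - (if i \<in> B then 1 else 0) =
      c * ((if i \<in> A then 1 else 0) - (if i \<in> B then (1::real) else 0))"
    using arg_cong[OF c, of "\<lambda>v. v $ i"] by (simp add: rho_nth)
  have "c = 0 \<or> c = 1 \<or> c = -1" using ci i by (auto split: if_splits)
  moreover have "c \<noteq> 0"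
  proof
    assume "c = 0" hence "rho C = rho B" using c by simp
    thus False using assms(3) rho_inj by metis
  qed
  moreover have "c \<noteq> 1"
  proof
    assume "c = 1" hence "rho C = rho A" using c by simp
    thus False using assms(2) rho_inj by metis
  qed
  moreover have "c \<noteq> -1" using ci i by (auto split: if_splits)
  ultimately show False by blast
qed

lemma aff_dim_3:
  fixes A B C :: "'a::finite set"
  assumes "A \<noteq> B" "A \<noteq> C" "B \<noteq> C"
  shows "aff_dim (convex hull {rho A, rho B, rho C}) = 2"
proof -
  have d: "rho A \<noteq> rho B" "rho A \<noteq> rho C" "rho B \<noteq> rho C" using assms rho_inj by blast+
  have "\<not> affine_dependent {rho A, rho B, rho C}"
    using not_collinear_rho[OF assms] collinear_3_eq_affine_dependent by blast
  from aff_dim_affine_independent[OF this] show ?thesis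
    using d by (simp add: aff_dim_convex_hull)
qed

locale wr =
  fixes r :: "'n::{finite,order} \<Rightarrow> nat"
  assumes less_iff: "\<And>x y. x < y \<longleftrightarrow> r x < r y"
    and contig: "\<And>x. 0 < r x \<Longrightarrow> \<exists>y. r y = r x - 1"
begin

definition lev :: "nat \<Rightarrow> 'n set" where "lev k = {x. r x = k}"
definition low :: "nat \<Rightarrow> 'n set" where "low k = {x. r x < k}"

lemma le_iff: "x \<le> y \<longleftrightarrow> x = y \<or> r x < r y"
  using less_iff[of x y] by (auto simp: order_le_less)

lemma lev_ne_aux: "r x = k \<Longrightarrow> \<exists>y. r y = k - d"
proof (induction d)
  case 0 thus ?case by auto
next
  case (Suc d)
  then obtain y where y: "r y = k - d" by auto
  show ?case
  proof (cases "k - d > 0")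
    case True
    have "0 < r y" using y True by simp
    then obtain z where "r z = r y - 1" using contig by blast
    thus ?thesis using y by (intro exI[of _ z]) simp
  next
    case False thus ?thesis using y by (intro exI[of _ y]) simp
  qed
qed

lemma lev_ne: "x \<in> lev k \<Longrightarrow> j \<le> k \<Longrightarrow> lev j \<noteq> {}"
  using lev_ne_aux[of x k "k - j"] by (auto simp: lev_def)

lemma lev_ne': "S \<subseteq> lev k \<Longrightarrow> S \<noteq> {} \<Longrightarrow> j \<le> k \<Longrightarrow> lev j \<noteq> {}"
  using lev_ne by blast

lemma lev_same: "Y \<subseteq> lev a \<Longrightarrow> Y \<subseteq> lev b \<Longrightarrow> Y \<noteq> {} \<Longrightarrow> a = b"
  by (auto simp: lev_def)

lemma lev_disj: "a \<noteq> b \<Longrightarrow> lev a \<inter> lev b = {}"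
  by (auto simp: lev_def)

lemma chain_iff: "poset_chain C \<longleftrightarrow> (\<forall>x\<in>C. \<forall>y\<in>C. r x = r y \<longrightarrow> x = y)"
  unfolding poset_chain_def le_iff by (metis nat_neq_iff)

lemma anti_iff: "poset_antichain A \<longleftrightarrow> (\<forall>x\<in>A. \<forall>y\<in>A. r x = r y)"
  unfolding poset_antichain_def le_iff by (metis less_irrefl nat_neq_iff)

lemma ideal_iff: "poset_ideal I \<longleftrightarrow> (\<forall>x\<in>I. \<forall>y. r y < r x \<longrightarrow> y \<in> I)"
  unfolding poset_ideal_def le_iff by blast

lemma anti_lev: "A \<subseteq> lev k \<Longrightarrow> poset_antichain A"
  by (auto simp: anti_iff lev_def)

lemma ideal_low: "S \<subseteq> lev m \<Longrightarrow> poset_ideal (low m \<union> S)"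
  by (auto simp: ideal_iff lev_def low_def)

lemma chain2: "r u \<noteq> r v \<Longrightarrow> poset_chain {u, v}"
  by (auto simp: chain_iff)

lemma chain3: "r u \<noteq> r v \<Longrightarrow> r u \<noteq> r w \<Longrightarrow> r v \<noteq> r w \<Longrightarrow> poset_chain {u, v, w}"
  by (auto simp: chain_iff)

lemma chain1: "poset_chain {u}"
  by (simp add: poset_chain_def)

lemma CE1:
  assumes S: "S \<subseteq> lev m" and x: "x \<in> lev m" "x \<notin> S"
  shows "is_k_face chain_polytope 1 (convex hull {rho S, rho (insert x S)})"
proof -
  let ?Z = "- insert x S" and ?Ch = "(\<lambda>s. {s}) ` S"
  have f: "convex hull {rho S, rho (insert x S)} face_of chain_polytope"
  proof (rule C_face_hull[where Z = ?Z and Ch = ?Ch])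
    show "\<forall>c\<in>?Ch. poset_chain c" using chain1 by auto
    show "\<forall>v\<in>{rho S, rho (insert x S)}. v \<in> chain_polytope \<and> (\<forall>i\<in>?Z. v $ i = 0) \<and> (\<forall>c\<in>?Ch. (\<Sum>i\<in>c. v $ i) = 1)"
      using rho_anti_in[OF anti_lev[OF S]] rho_anti_in[OF anti_lev[of "insert x S" m]] S x
      by (auto simp: rho_nth)
  next
    fix y :: "real^'n::{finite,order}" assume y: "y \<in> chain_polytope" "\<forall>i\<in>?Z. y $ i = 0" "\<forall>c\<in>?Ch. (\<Sum>i\<in>c. y $ i) = 1"
    define t where "t = y $ x"
    have t0: "0 \<le> t" using y(1) by (auto simp: chain_polytope_def t_def)
    have t1: "t \<le> 1" using y(1) chain1[of x] unfolding chain_polytope_def t_def by force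
    have ys: "y $ s = 1" if "s \<in> S" for s using y(3) that by auto
    have "y = (1 - t) *\<^sub>R rho S + t *\<^sub>R rho (insert x S)"
    proof (subst vec_eq_iff, intro allI)
      fix i
      show "y $ i = ((1 - t) *\<^sub>R rho S + t *\<^sub>R rho (insert x S)) $ i"
        using ys y(2) x by (cases "i \<in> S"; cases "i = x") (auto simp: rho_nth t_def)
    qed
    thus "y \<in> convex hull {rho S, rho (insert x S)}"
      unfolding convex_hull_2 using t0 t1 by force
  qed
  moreover have "S \<noteq> insert x S" using x by auto
  ultimately show ?thesis unfolding is_k_face_def using aff_dim_2 by blast
qed

lemma CE2:
  assumes U: "U \<subseteq> lev a" "U \<noteq> {}" and V: "V \<subseteq> lev b" "V \<noteq> {}" and ab: "a \<noteq> b"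
  shows "is_k_face chain_polytope 1 (convex hull {rho U, rho V})"
proof -
  let ?Z = "- (U \<union> V)" and ?Ch = "{{u, v} | u v. u \<in> U \<and> v \<in> V}"
  have UV: "u \<noteq> v" "u \<notin> V" "v \<notin> U" "r u \<noteq> r v" if "u \<in> U" "v \<in> V" for u v
    using that U V ab by (auto simp: lev_def)
  have f: "convex hull {rho U, rho V} face_of chain_polytope"
  proof (rule C_face_hull[where Z = ?Z and Ch = ?Ch])
    show "\<forall>c\<in>?Ch. poset_chain c" using chain2 UV(4) by blast
    show "\<forall>w\<in>{rho U, rho V}. w \<in> chain_polytope \<and> (\<forall>i\<in>?Z. w $ i = 0) \<and> (\<forall>c\<in>?Ch. (\<Sum>i\<in>c. w $ i) = 1)"
    proof -
      have sU: "(\<Sum>i\<in>{u, v}. rho U $ i) = 1" "(\<Sum>i\<in>{u, v}. rho V $ i) = 1"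
        if "u \<in> U" "v \<in> V" for u v using UV[OF that] that by (simp_all add: rho_nth)
      have c1: "\<forall>c\<in>?Ch. (\<Sum>i\<in>c. rho U $ i) = 1 \<and> (\<Sum>i\<in>c. rho V $ i) = 1"
      proof
        fix c assume "c \<in> ?Ch"
        then obtain u v where "c = {u, v}" "u \<in> U" "v \<in> V" by blast
        thus "(\<Sum>i\<in>c. rho U $ i) = 1 \<and> (\<Sum>i\<in>c. rho V $ i) = 1" using sU by simp
      qed
      have z1: "\<forall>i\<in>?Z. rho U $ i = 0" "\<forall>i\<in>?Z. rho V $ i = 0" by (auto simp: rho_nth)
      note a1 = rho_anti_in[OF anti_lev[OF U(1)]] rho_anti_in[OF anti_lev[OF V(1)]]
      show ?thesis
      proof (intro ballI)
        fix w assume "w \<in> {rho U, rho V}"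
        hence "w = rho U \<or> w = rho V" by blast
        thus "w \<in> chain_polytope \<and> (\<forall>i\<in>?Z. w $ i = 0) \<and> (\<forall>c\<in>?Ch. (\<Sum>i\<in>c. w $ i) = 1)"
          using c1 z1 a1 by fast
      qed
    qed
  next
    fix y :: "real^'n::{finite,order}" assume y: "y \<in> chain_polytope" "\<forall>i\<in>?Z. y $ i = 0" "\<forall>c\<in>?Ch. (\<Sum>i\<in>c. y $ i) = 1"
    obtain u0 v0 where u0: "u0 \<in> U" and v0: "v0 \<in> V" using U V by blast
    have s: "y $ u + y $ v = 1" if "u \<in> U" "v \<in> V" for u v
    proof -
      have "(\<Sum>i\<in>{u, v}. y $ i) = 1" using y(3) that by blast
      thus ?thesis using UV[OF that] by simp
    qed
    define t where "t = y $ v0"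
    have t0: "0 \<le> t" using y(1) by (auto simp: chain_polytope_def t_def)
    have "0 \<le> y $ u0" using y(1) by (auto simp: chain_polytope_def)
    hence t1: "t \<le> 1" using s[OF u0 v0] by (simp add: t_def)
    have "y = (1 - t) *\<^sub>R rho U + t *\<^sub>R rho V"
    proof (subst vec_eq_iff, intro allI)
      fix i
      show "y $ i = ((1 - t) *\<^sub>R rho U + t *\<^sub>R rho V) $ i"
      proof (cases "i \<in> U")
        case True thus ?thesis using s[OF True v0] UV[OF True v0] by (auto simp: rho_nth t_def)
      next
        case F: False
        show ?thesis
        proof (cases "i \<in> V")
          case True thus ?thesis using s[OF u0 True] s[OF u0 v0] F by (auto simp: rho_nth t_def)
        next
          case False thus ?thesis using F y(2) by (auto simp: rho_nth)
        qed
      qed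
    qed
    thus "y \<in> convex hull {rho U, rho V}"
      unfolding convex_hull_2 using t0 t1 by force
  qed
  moreover have "U \<noteq> V" using UV U V by blast
  ultimately show ?thesis unfolding is_k_face_def using aff_dim_2 by blast
qed

end

lemma DeltaC_I:
  fixes A B C :: "'n::{finite,order} set"
  assumes "poset_antichain A" "poset_antichain B" "poset_antichain C" "A \<noteq> B" "B \<noteq> C" "A \<noteq> C"
    "convex hull {rho A, rho B, rho C} face_of (chain_polytope :: (real^'n::{finite,order}) set)"
  shows "{A, B, C} \<in> Delta_C"
proof -
  have "is_k_face (chain_polytope :: (real^'n::{finite,order}) set) 2 (convex hull {rho A, rho B, rho C})"
    unfolding is_k_face_def using assms aff_dim_3 by blast
  thus ?thesis unfolding Delta_C_def using assms by blast
qed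

context wr begin

lemma CT3:
  assumes U: "U \<subseteq> lev a" "U \<noteq> {}" and V: "V \<subseteq> lev b" "V \<noteq> {}" and W: "W \<subseteq> lev c" "W \<noteq> {}"
    and d: "a \<noteq> b" "a \<noteq> c" "b \<noteq> c"
  shows "{U, V, W} \<in> Delta_C"
proof -
  let ?Z = "- (U \<union> V \<union> W)" and ?Ch = "{{u, v, w} | u v w. u \<in> U \<and> v \<in> V \<and> w \<in> W}"
  have D: "u \<noteq> v" "u \<noteq> w" "v \<noteq> w" "u \<notin> V" "u \<notin> W" "v \<notin> U" "v \<notin> W" "w \<notin> U" "w \<notin> V"
     "r u \<noteq> r v" "r u \<noteq> r w" "r v \<noteq> r w"
    if "u \<in> U" "v \<in> V" "w \<in> W" for u v w
    using that U V W d by (auto simp: lev_def)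
  have f: "convex hull {rho U, rho V, rho W} face_of chain_polytope"
  proof (rule C_face_hull[where Z = ?Z and Ch = ?Ch])
    show "\<forall>c\<in>?Ch. poset_chain c" using chain3 D(10-12) by blast
    show "\<forall>x\<in>{rho U, rho V, rho W}. x \<in> chain_polytope \<and> (\<forall>i\<in>?Z. x $ i = 0) \<and> (\<forall>c\<in>?Ch. (\<Sum>i\<in>c. x $ i) = 1)"
    proof -
      have sU: "(\<Sum>i\<in>{u, v, w}. rho U $ i) = 1" "(\<Sum>i\<in>{u, v, w}. rho V $ i) = 1"
          "(\<Sum>i\<in>{u, v, w}. rho W $ i) = 1"
        if "u \<in> U" "v \<in> V" "w \<in> W" for u v w using D[OF that] that by (simp_all add: rho_nth)
      have c1: "\<forall>c\<in>?Ch. (\<Sum>i\<in>c. rho U $ i) = 1 \<and> (\<Sum>i\<in>c. rho V $ i) = 1 \<and> (\<Sum>i\<in>c. rho W $ i) = 1"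
      proof
        fix c assume "c \<in> ?Ch"
        then obtain u v w where "c = {u, v, w}" "u \<in> U" "v \<in> V" "w \<in> W" by blast
        thus "(\<Sum>i\<in>c. rho U $ i) = 1 \<and> (\<Sum>i\<in>c. rho V $ i) = 1 \<and> (\<Sum>i\<in>c. rho W $ i) = 1"
          using sU by simp
      qed
      have z1: "\<forall>i\<in>?Z. rho U $ i = 0" "\<forall>i\<in>?Z. rho V $ i = 0" "\<forall>i\<in>?Z. rho W $ i = 0"
        by (auto simp: rho_nth)
      note a1 = rho_anti_in[OF anti_lev[OF U(1)]] rho_anti_in[OF anti_lev[OF V(1)]]
        rho_anti_in[OF anti_lev[OF W(1)]]
      show ?thesis
      proof (intro ballI)
        fix x assume "x \<in> {rho U, rho V, rho W}"
        hence "x = rho U \<or> x = rho V \<or> x = rho W" by blast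
        thus "x \<in> chain_polytope \<and> (\<forall>i\<in>?Z. x $ i = 0) \<and> (\<forall>c\<in>?Ch. (\<Sum>i\<in>c. x $ i) = 1)"
          using c1 z1 a1 by fast
      qed
    qed
  next
    fix y :: "real^'n::{finite,order}" assume y: "y \<in> chain_polytope" "\<forall>i\<in>?Z. y $ i = 0" "\<forall>c\<in>?Ch. (\<Sum>i\<in>c. y $ i) = 1"
    obtain u0 v0 w0 where u0: "u0 \<in> U" and v0: "v0 \<in> V" and w0: "w0 \<in> W" using U V W by blast
    have s: "y $ u + y $ v + y $ w = 1" if "u \<in> U" "v \<in> V" "w \<in> W" for u v w
    proof -
      have "(\<Sum>i\<in>{u, v, w}. y $ i) = 1" using y(3) that by blast
      thus ?thesis using D[OF that] by (simp add: add.assoc)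
    qed
    have nn: "0 \<le> y $ i" for i using y(1) by (auto simp: chain_polytope_def)
    define \<alpha> where "\<alpha> = y $ u0"
    define \<beta> where "\<beta> = y $ v0"
    define \<gamma> where "\<gamma> = y $ w0"
    have "y = \<alpha> *\<^sub>R rho U + \<beta> *\<^sub>R rho V + \<gamma> *\<^sub>R rho W"
    proof (subst vec_eq_iff, intro allI)
      fix i
      show "y $ i = (\<alpha> *\<^sub>R rho U + \<beta> *\<^sub>R rho V + \<gamma> *\<^sub>R rho W) $ i"
      proof (cases "i \<in> U")
        case True thus ?thesis using s[OF True v0 w0] s[OF u0 v0 w0] D[OF True v0 w0]
          by (auto simp: rho_nth \<alpha>_def \<beta>_def \<gamma>_def)
      next
        case F1: False
        show ?thesis
        proof (cases "i \<in> V")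
          case True thus ?thesis using s[OF u0 True w0] s[OF u0 v0 w0] D[OF u0 True w0] F1
            by (auto simp: rho_nth \<alpha>_def \<beta>_def \<gamma>_def)
        next
          case F2: False
          show ?thesis
          proof (cases "i \<in> W")
            case True thus ?thesis using s[OF u0 v0 True] s[OF u0 v0 w0] F1 F2
              by (auto simp: rho_nth \<alpha>_def \<beta>_def \<gamma>_def)
          next
            case False thus ?thesis using F1 F2 y(2) by (auto simp: rho_nth)
          qed
        qed
      qed
    qed
    moreover have "\<alpha> + \<beta> + \<gamma> = 1" using s[OF u0 v0 w0] by (simp add: \<alpha>_def \<beta>_def \<gamma>_def)
    moreover have "0 \<le> \<alpha>" "0 \<le> \<beta>" "0 \<le> \<gamma>" using nn by (auto simp: \<alpha>_def \<beta>_def \<gamma>_def)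
    ultimately show "y \<in> convex hull {rho U, rho V, rho W}"
      unfolding convex_hull_3 by blast
  qed
  obtain u0 v0 w0 where u0: "u0 \<in> U" and v0: "v0 \<in> V" and w0: "w0 \<in> W" using U V W by blast
  have ne: "U \<noteq> V" "V \<noteq> W" "U \<noteq> W" using D[OF u0 v0 w0] u0 v0 w0 by auto
  show ?thesis
    by (rule DeltaC_I[OF anti_lev[OF U(1)] anti_lev[OF V(1)] anti_lev[OF W(1)] ne f])
qed

lemma CT2:
  assumes U: "U \<subseteq> lev a" "u \<in> U" "U - {u} \<noteq> {}" and V: "V \<subseteq> lev b" "V \<noteq> {}"
    and d: "a \<noteq> b"
  shows "{U, U - {u}, V} \<in> Delta_C"
proof -
  let ?U' = "U - {u}"
  let ?Z = "- (U \<union> V)" and ?Ch = "{{v, w} | v w. v \<in> V \<and> w \<in> ?U'}"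
  have D: "v \<noteq> w" "v \<notin> U" "w \<notin> V" "r v \<noteq> r w" if "v \<in> V" "w \<in> U" for v w
  proof -
    have "r v = b" "r w = a" using that U(1) V(1) by (auto simp: lev_def)
    thus "v \<noteq> w" "v \<notin> U" "w \<notin> V" "r v \<noteq> r w" using d that U(1) V(1) by (auto simp: lev_def)
  qed
  have f: "convex hull {rho U, rho ?U', rho V} face_of chain_polytope"
  proof (rule C_face_hull[where Z = ?Z and Ch = ?Ch])
    show "\<forall>c\<in>?Ch. poset_chain c" using chain2 D(4) by blast
    show "\<forall>x\<in>{rho U, rho ?U', rho V}. x \<in> chain_polytope \<and> (\<forall>i\<in>?Z. x $ i = 0) \<and> (\<forall>c\<in>?Ch. (\<Sum>i\<in>c. x $ i) = 1)"
    proof -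
      have sU: "(\<Sum>i\<in>{v, w}. rho U $ i) = 1" "(\<Sum>i\<in>{v, w}. rho ?U' $ i) = 1"
          "(\<Sum>i\<in>{v, w}. rho V $ i) = 1"
        if "v \<in> V" "w \<in> ?U'" for v w using D[of v w] that by (simp_all add: rho_nth)
      have c1: "\<forall>c\<in>?Ch. (\<Sum>i\<in>c. rho U $ i) = 1 \<and> (\<Sum>i\<in>c. rho ?U' $ i) = 1 \<and> (\<Sum>i\<in>c. rho V $ i) = 1"
      proof
        fix c assume "c \<in> ?Ch"
        then obtain v w where "c = {v, w}" "v \<in> V" "w \<in> ?U'" by blast
        thus "(\<Sum>i\<in>c. rho U $ i) = 1 \<and> (\<Sum>i\<in>c. rho ?U' $ i) = 1 \<and> (\<Sum>i\<in>c. rho V $ i) = 1"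
          using sU by simp
      qed
      have z1: "\<forall>i\<in>?Z. rho U $ i = 0" "\<forall>i\<in>?Z. rho ?U' $ i = 0" "\<forall>i\<in>?Z. rho V $ i = 0"
        by (auto simp: rho_nth)
      have U'l: "?U' \<subseteq> lev a" using U by auto
      note a1 = rho_anti_in[OF anti_lev[OF U(1)]] rho_anti_in[OF anti_lev[OF U'l]]
        rho_anti_in[OF anti_lev[OF V(1)]]
      show ?thesis
      proof (intro ballI)
        fix x assume "x \<in> {rho U, rho ?U', rho V}"
        hence "x = rho U \<or> x = rho ?U' \<or> x = rho V" by blast
        thus "x \<in> chain_polytope \<and> (\<forall>i\<in>?Z. x $ i = 0) \<and> (\<forall>c\<in>?Ch. (\<Sum>i\<in>c. x $ i) = 1)"
          using c1 z1 a1 by fast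
      qed
    qed
  next
    fix y :: "real^'n::{finite,order}" assume y: "y \<in> chain_polytope" "\<forall>i\<in>?Z. y $ i = 0" "\<forall>c\<in>?Ch. (\<Sum>i\<in>c. y $ i) = 1"
    obtain v0 w0 where v0: "v0 \<in> V" and w0: "w0 \<in> ?U'" using U V by blast
    have s: "y $ v + y $ w = 1" if "v \<in> V" "w \<in> ?U'" for v w
    proof -
      have "(\<Sum>i\<in>{v, w}. y $ i) = 1" using y(3) that by blast
      thus ?thesis using D[of v w] that by simp
    qed
    have nn: "0 \<le> y $ i" for i using y(1) by (auto simp: chain_polytope_def)
    have le: "y $ v0 + y $ u \<le> 1"
    proof -
      have "poset_chain {v0, u}" using D[OF v0 U(2)] chain2 by blast
      hence "(\<Sum>i\<in>{v0, u}. y $ i) \<le> 1" using y(1) by (auto simp: chain_polytope_def)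
      thus ?thesis using D[OF v0 U(2)] by simp
    qed
    define \<alpha> where "\<alpha> = y $ v0"
    define \<beta> where "\<beta> = y $ u"
    have "y = \<alpha> *\<^sub>R rho V + \<beta> *\<^sub>R rho U + (1 - \<alpha> - \<beta>) *\<^sub>R rho ?U'"
    proof (subst vec_eq_iff, intro allI)
      fix i
      show "y $ i = (\<alpha> *\<^sub>R rho V + \<beta> *\<^sub>R rho U + (1 - \<alpha> - \<beta>) *\<^sub>R rho ?U') $ i"
      proof (cases "i \<in> V")
        case True thus ?thesis using s[OF True w0] s[OF v0 w0] D[OF True] U(2) w0
          by (auto simp: rho_nth \<alpha>_def \<beta>_def)
      next
        case F1: False
        show ?thesis
        proof (cases "i = u")
          case True thus ?thesis using F1 U(2) by (auto simp: rho_nth \<alpha>_def \<beta>_def)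
        next
          case F2: False
          show ?thesis
          proof (cases "i \<in> U")
            case True thus ?thesis using s[OF v0, of i] F1 F2
              by (auto simp: rho_nth \<alpha>_def \<beta>_def)
          next
            case False thus ?thesis using F1 F2 y(2) by (auto simp: rho_nth)
          qed
        qed
      qed
    qed
    moreover have "0 \<le> \<alpha>" "0 \<le> \<beta>" "0 \<le> 1 - \<alpha> - \<beta>" using nn le by (auto simp: \<alpha>_def \<beta>_def)
    ultimately show "y \<in> convex hull {rho U, rho ?U', rho V}"
      unfolding convex_hull_3 by (intro CollectI exI[of _ \<beta>] exI[of _ "1 - \<alpha> - \<beta>"] exI[of _ \<alpha>]) auto
  qed
  obtain v0 where v0: "v0 \<in> V" using V by blast
  have ne: "U \<noteq> ?U'" "?U' \<noteq> V" "U \<noteq> V" using U(2,3) D[OF v0 U(2)] v0 by auto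
  have U'l: "?U' \<subseteq> lev a" using U by auto
  show ?thesis
    by (rule DeltaC_I[OF anti_lev[OF U(1)] anti_lev[OF U'l] anti_lev[OF V(1)] ne f])
qed

end

lemma face_tri_O:
  assumes "is_k_face (order_polytope :: (real^'n::{finite,order}) set) k (convex hull {rho I, rho J, rho K})"
  shows "convex hull (rho ` {I, J, K}) face_of (order_polytope :: (real^'n::{finite,order}) set)"
  using assms by (simp add: is_k_face_def)

lemma face_edge_O:
  assumes "is_k_face (order_polytope :: (real^'n::{finite,order}) set) k (convex hull {rho I, rho J})"
  shows "convex hull (rho ` {I, J}) face_of (order_polytope :: (real^'n::{finite,order}) set)"
  using assms by (simp add: is_k_face_def)

lemma ideal_Int: "poset_ideal I \<Longrightarrow> poset_ideal J \<Longrightarrow> poset_ideal (I \<inter> J)"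
  by (auto simp: poset_ideal_def)

lemma ideal_Un: "poset_ideal I \<Longrightarrow> poset_ideal J \<Longrightarrow> poset_ideal (I \<union> J)"
  by (auto simp: poset_ideal_def)

lemma O_IntUn:
  fixes TT :: "'n::{finite,order} set set"
  assumes F: "convex hull (rho ` TT) face_of (order_polytope :: (real^'n::{finite,order}) set)" and fin: "finite TT"
    and I: "I \<in> TT" and J: "J \<in> TT" and id: "poset_ideal I" "poset_ideal J"
  shows "I \<inter> J \<in> TT" "I \<union> J \<in> TT"
proof -
  show "I \<inter> J \<in> TT"
    by (rule O_split[OF F fin I J ideal_Int[OF id] ideal_Un[OF id]]) auto
  show "I \<union> J \<in> TT"
    by (rule O_split[OF F fin I J ideal_Un[OF id] ideal_Int[OF id]]) auto
qed

context wr begin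

lemma down_lev: "S \<subseteq> lev m \<Longrightarrow> S \<noteq> {} \<Longrightarrow> down_closure S = low m \<union> S"
  unfolding down_closure_def le_iff by (auto simp: lev_def low_def)

lemma maxs_lev:
  assumes "S \<subseteq> lev m" "S \<noteq> {}" shows "maxs (low m \<union> S) = S"
proof -
  obtain s where s: "s \<in> S" using assms by blast
  show ?thesis
    unfolding maxs_def le_iff using assms s by (auto simp: lev_def low_def subset_iff) 
qed

lemma maxs_empty: "maxs {} = {}" by (simp add: maxs_def)

lemma ideal_canon:
  assumes "poset_ideal I" "I \<noteq> {}"
  shows "\<exists>m S. S \<subseteq> lev m \<and> S \<noteq> {} \<and> I = low m \<union> S"
proof -
  define m where "m = Max (r ` I)"
  have m_in: "m \<in> r ` I" unfolding m_def using assms(2) by (intro Max_in) auto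
  have m_ge: "r x \<le> m" if "x \<in> I" for x unfolding m_def using that by (intro Max_ge) auto
  obtain y where y: "y \<in> I" "r y = m" using m_in by auto
  have "low m \<subseteq> I" using assms(1) y unfolding ideal_iff low_def by blast
  moreover have "I \<subseteq> low m \<union> (I \<inter> lev m)" using m_ge by (force simp: low_def lev_def)
  ultimately have "I = low m \<union> (I \<inter> lev m)" by blast
  moreover have "I \<inter> lev m \<noteq> {}" using y by (auto simp: lev_def)
  ultimately show ?thesis by blast
qed

lemma canon_unique:
  assumes "S \<subseteq> lev m" "S \<noteq> {}" "S' \<subseteq> lev m'" "S' \<noteq> {}" "low m \<union> S = low m' \<union> S'"
  shows "m = m'" "S = S'"
proof -
  show "S = S'" using maxs_lev[OF assms(1,2)] maxs_lev[OF assms(3,4)] assms(5) by simp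
  thus "m = m'" using assms lev_same by blast
qed

lemma canon_sub:
  assumes "R \<subseteq> lev k" "R \<noteq> {}" "S \<subseteq> lev m" "low k \<union> R \<subseteq> low m \<union> S"
  shows "k \<le> m" "k = m \<Longrightarrow> R \<subseteq> S"
proof -
  obtain x where x: "x \<in> R" using assms by blast
  hence "x \<in> low m \<union> S" using assms by blast
  moreover have "r x = k" using x assms by (auto simp: lev_def)
  ultimately show "k \<le> m" using assms(3) by (auto simp: low_def lev_def)
  show "R \<subseteq> S" if "k = m" using that assms by (auto simp: low_def lev_def)
qed

lemma low_Suc: "low (Suc j) = low j \<union> lev j"
  by (auto simp: low_def lev_def)

lemma O_gap:
  fixes TT :: "'n::{finite,order} set set"
  assumes F: "convex hull (rho ` TT) face_of (order_polytope :: (real^'n::{finite,order}) set)" and fin: "finite TT"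
    and P: "P \<in> TT" "poset_ideal P" and Q: "Q \<in> TT" "poset_ideal Q" and PQ: "P \<subseteq> Q"
    and gap: "Q - P \<subseteq> lev j" and x: "x \<in> Q" "x \<notin> P"
  shows "insert x P \<in> TT"
proof (rule O_split[OF F fin P(1) Q(1)])
  have rx: "r x = j" using gap x by (auto simp: lev_def)
  show "poset_ideal (insert x P)" unfolding ideal_iff
  proof (intro ballI allI impI)
    fix z y assume z: "z \<in> insert x P" and y: "r y < r z"
    show "y \<in> insert x P"
    proof (cases "z = x")
      case True
      hence "y \<in> Q" using Q(2) x(1) y unfolding ideal_iff by blast
      moreover have "y \<notin> Q - P" using gap y True rx by (auto simp: lev_def)
      ultimately show ?thesis by blast
    next
      case False thus ?thesis using z P(2) y unfolding ideal_iff by blast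
    qed
  qed
  show "poset_ideal (Q - {x})" unfolding ideal_iff
  proof (intro ballI allI impI)
    fix z y assume z: "z \<in> Q - {x}" and y: "r y < r z"
    have yQ: "y \<in> Q" using z y Q(2) unfolding ideal_iff by blast
    have "y \<noteq> x"
    proof
      assume "y = x"
      hence "z \<notin> P" using P(2) x(2) y unfolding ideal_iff by blast
      hence "r z = j" using gap z by (auto simp: lev_def)
      thus False using y rx \<open>y = x\<close> by simp
    qed
    thus "y \<in> Q - {x}" using yQ by blast
  qed
  show "insert x P \<union> (Q - {x}) = P \<union> Q" using PQ x by blast
  show "insert x P \<inter> (Q - {x}) = P \<inter> Q" using PQ x by blast
qed

definition special :: "'n set \<Rightarrow> bool" where
  "special J \<longleftrightarrow> (\<exists>m S. 1 \<le> m \<and> S \<subseteq> lev m \<and> 2 \<le> card S \<and> J = low m \<union> S)"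

lemma card_ge2: "finite S \<Longrightarrow> S \<noteq> {} \<Longrightarrow> card S \<noteq> 1 \<Longrightarrow> 2 \<le> card S"
  by (metis One_nat_def Suc_1 Suc_leI card_gt_0_iff le_antisym not_less_eq_eq)

lemma EO_form1:
  assumes I: "poset_ideal I" and J: "poset_ideal J" and IJ: "I \<subseteq> J" "I \<noteq> J"
    and F: "convex hull (rho ` {I, J}) face_of (order_polytope :: (real^'n::{finite,order}) set)"
    and nC: "\<not> is_k_face (chain_polytope :: (real^'n::{finite,order}) set) 1 (convex hull {rho (maxs I), rho (maxs J)})"
  shows "I = {} \<and> special J"
proof -
  have Jne: "J \<noteq> {}" using IJ by blast
  obtain m S where S: "S \<subseteq> lev m" "S \<noteq> {}" "J = low m \<union> S" using ideal_canon[OF J Jne] by blast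
  have mJ: "maxs J = S" using maxs_lev[OF S(1,2)] S(3) by simp
  have fin: "finite {I, J}" by simp
  show ?thesis
  proof (cases "I = {}")
    case True
    have c1: "card S \<noteq> 1"
    proof
      assume "card S = 1"
      then obtain y where y: "S = {y}" by (metis card_1_singletonE)
      have "is_k_face (chain_polytope :: (real^'n::{finite,order}) set) 1 (convex hull {rho {}, rho (insert y {})})"
        by (rule CE1[of "{}" m y]) (use S y in auto)
      thus False using nC True mJ y by (simp add: maxs_empty)
    qed
    hence c2: "2 \<le> card S" using S(2) by (intro card_ge2) auto
    have "m \<noteq> 0"
    proof
      assume m0: "m = 0"
      hence JS: "J = S" using S(3) by (simp add: low_def)
      obtain x where x: "x \<in> S" using S(2) by blast
      have "insert x I \<in> {I, J}"
        by (rule O_gap[OF F fin _ I _ J IJ(1), of m x]) (use True JS S x m0 in auto)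
      hence "{x} = S" using True JS by auto
      thus False using c2 by auto
    qed
    thus ?thesis unfolding special_def using True S c2 by (intro conjI exI[of _ m] exI[of _ S]) auto
  next
    case False
    obtain k R where R: "R \<subseteq> lev k" "R \<noteq> {}" "I = low k \<union> R" using ideal_canon[OF I False] by blast
    have mI: "maxs I = R" using maxs_lev[OF R(1,2)] R(3) by simp
    have km: "k \<le> m" using canon_sub[OF R(1,2) S(1)] IJ R S by blast
    show ?thesis
    proof (cases "k = m")
      case True
      have RS: "R \<subseteq> S" using canon_sub[OF R(1,2) S(1)] IJ R S True by blast
      have "R \<noteq> S" using IJ R S True by blast
      then obtain x where x: "x \<in> S" "x \<notin> R" using RS by blast
      have xI: "x \<notin> I" using x S R True by (auto simp: low_def lev_def)
      have "insert x I \<in> {I, J}"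
        by (rule O_gap[OF F fin _ I _ J IJ(1), of m x]) (use R S True x xI in \<open>auto simp: low_def lev_def\<close>)
      hence "insert x I = J" using xI by auto
      hence SR: "S = insert x R" using R S True x by (auto simp: low_def lev_def)
      have "is_k_face (chain_polytope :: (real^'n::{finite,order}) set) 1 (convex hull {rho R, rho (insert x R)})"
        by (rule CE1[of R m x]) (use R S True x in auto)
      thus ?thesis using nC mI mJ SR by simp
    next
      case False
      have "is_k_face (chain_polytope :: (real^'n::{finite,order}) set) 1 (convex hull {rho R, rho S})"
        by (rule CE2[OF R(1,2) S(1,2) False])
      thus ?thesis using nC mI mJ by simp
    qed
  qed
qed

lemma EO_form:
  assumes I: "poset_ideal I" and J: "poset_ideal J" and IJ: "I \<noteq> J"
    and E: "is_k_face (order_polytope :: (real^'n::{finite,order}) set) 1 (convex hull {rho I, rho J})"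
    and nC: "\<not> is_k_face (chain_polytope :: (real^'n::{finite,order}) set) 1 (convex hull {rho (maxs I), rho (maxs J)})"
  shows "(I = {} \<and> special J) \<or> (J = {} \<and> special I)"
proof -
  have F: "convex hull (rho ` {I, J}) face_of (order_polytope :: (real^'n::{finite,order}) set)"
    using face_edge_O[OF E] .
  have "I \<inter> J \<in> {I, J}" using O_IntUn(1)[OF F _ _ _ I J] by simp
  hence "I \<subseteq> J \<or> J \<subseteq> I" by blast
  thus ?thesis
  proof
    assume "I \<subseteq> J" thus ?thesis using EO_form1[OF I J _ IJ F nC] by blast
  next
    assume "J \<subseteq> I"
    moreover have "convex hull (rho ` {J, I}) face_of (order_polytope :: (real^'n::{finite,order}) set)"
      using F by (simp add: insert_commute)
    moreover have "\<not> is_k_face (chain_polytope :: (real^'n::{finite,order}) set) 1 (convex hull {rho (maxs J), rho (maxs I)})"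
      using nC by (simp add: insert_commute)
    ultimately show ?thesis using EO_form1[OF J I _ IJ[symmetric]] by blast
  qed
qed

lemma EC_mem:
  assumes j: "1 \<le> j" and V: "V \<subseteq> lev j" "2 \<le> card V"
  shows "{lev (j - 1), V} \<in> Estar_C"
proof -
  have Vne: "V \<noteq> {}" using V by auto
  have Ane: "lev (j - 1) \<noteq> {}" using lev_ne'[OF V(1) Vne, of "j - 1"] by simp
  have jj: "Suc (j - 1) = j" using j by simp
  have dA: "down_closure (lev (j - 1)) = low j"
    using down_lev[of "lev (j - 1)" "j - 1"] Ane low_Suc[of "j - 1"] jj by simp
  have dV: "down_closure V = low j \<union> V" using down_lev[OF V(1) Vne] .
  have AV: "lev (j - 1) \<noteq> V" using Ane Vne V(1) lev_same[of V j "j - 1"] j by auto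
  have Cedge: "is_k_face (chain_polytope :: (real^'n::{finite,order}) set) 1 (convex hull {rho (lev (j - 1)), rho V})"
    by (rule CE2[OF _ Ane V(1) Vne]) (use j in auto)
  have nO: "\<not> is_k_face (order_polytope :: (real^'n::{finite,order}) set) 1 (convex hull {rho (low j), rho (low j \<union> V)})"
  proof
    assume E: "is_k_face (order_polytope :: (real^'n::{finite,order}) set) 1 (convex hull {rho (low j), rho (low j \<union> V)})"
    have F: "convex hull (rho ` {low j, low j \<union> V}) face_of (order_polytope :: (real^'n::{finite,order}) set)"
      using face_edge_O[OF E] .
    obtain x where x: "x \<in> V" using Vne by blast
    have xl: "x \<notin> low j" using x V by (auto simp: low_def lev_def)
    have il: "poset_ideal (low j)" using ideal_low[of "{}" j] by simp
    have "insert x (low j) \<in> {low j, low j \<union> V}"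
    proof (rule O_gap[OF F _ _ il _ ideal_low[OF V(1)] _ _ _ xl, where j = j])
      show "finite {low j, low j \<union> V}" by simp
      show "low j \<in> {low j, low j \<union> V}" by simp
      show "low j \<union> V \<in> {low j, low j \<union> V}" by simp
      show "low j \<subseteq> low j \<union> V" by blast
      show "low j \<union> V - low j \<subseteq> lev j" using V(1) by blast
      show "x \<in> low j \<union> V" using x by blast
    qed
    hence ins: "insert x (low j) = low j \<union> V" using xl by auto
    have "V \<subseteq> {x}"
    proof
      fix v assume v: "v \<in> V"
      hence "v \<notin> low j" using V(1) by (auto simp: low_def lev_def)
      moreover have "v \<in> insert x (low j)" using ins v by blast
      ultimately show "v \<in> {x}" by blast
    qed
    hence "card V \<le> 1" using card_mono[of "{x}" V] by simp
    thus False using V by simp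
  qed
  have nO': "\<not> is_k_face (order_polytope :: (real^'n::{finite,order}) set) 1
      (convex hull {rho (down_closure (lev (j - 1))), rho (down_closure V)})"
    unfolding dA dV by (rule nO)
  have all: "{lev (j - 1), V} = {lev (j - 1), V} \<and> poset_antichain (lev (j - 1)) \<and> poset_antichain V \<and>
      lev (j - 1) \<noteq> V \<and> is_k_face (chain_polytope :: (real^'n::{finite,order}) set) 1 (convex hull {rho (lev (j - 1)), rho V}) \<and>
      \<not> is_k_face (order_polytope :: (real^'n::{finite,order}) set) 1
      (convex hull {rho (down_closure (lev (j - 1))), rho (down_closure V)})"
    using anti_lev[of "lev (j - 1)" "j - 1"] anti_lev[OF V(1)] AV Cedge nO' by simp
  show ?thesis unfolding Estar_C_def
    by (rule CollectI, rule exI, rule exI, rule all)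
qed

end

context wr begin

lemma three_cases:
  assumes "X \<in> {I, J, K}" "Y \<in> {I, J, K}" "X \<noteq> Y" "P \<in> {I, J, K}" "Q \<in> {I, J, K}"
    "P \<noteq> X" "P \<noteq> Y" "Q \<noteq> X" "Q \<noteq> Y"
  shows "P = Q"
  using assms by auto

lemma DO_shape:
  assumes T: "T \<in> Deltastar_O"
  shows "\<exists>M T'. T = {{}, M, T'} \<and> poset_ideal M \<and> poset_ideal T' \<and> M \<noteq> {} \<and> M \<subseteq> T' \<and> M \<noteq> T' \<and>
     convex hull (rho ` T) face_of (order_polytope :: (real^'n::{finite,order}) set) \<and> (special M \<or> special T')"
proof -
  have TD: "T \<in> Delta_O" and TE: "\<exists>A\<in>T. \<exists>B\<in>T. A \<noteq> B \<and> {A, B} \<in> Estar_O"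
    using T unfolding Deltastar_O_def by auto
  obtain I J K where IJK: "T = {I, J, K}" "poset_ideal I" "poset_ideal J" "poset_ideal K"
      "I \<noteq> J" "J \<noteq> K" "I \<noteq> K"
      and Fk: "is_k_face (order_polytope :: (real^'n::{finite,order}) set) 2 (convex hull {rho I, rho J, rho K})"
    using TD unfolding Delta_O_def by blast
  have F: "convex hull (rho ` T) face_of (order_polytope :: (real^'n::{finite,order}) set)"
    using face_tri_O[OF Fk] IJK(1) by simp
  have fin: "finite T" using IJK(1) by simp
  have idT: "poset_ideal X" if "X \<in> T" for X using that IJK by auto
  have comp: "X \<subseteq> Y \<or> Y \<subseteq> X" if X: "X \<in> T" and Y: "Y \<in> T" for X Y
  proof (rule ccontr)
    assume nc: "\<not> (X \<subseteq> Y \<or> Y \<subseteq> X)"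
    have i: "X \<inter> Y \<in> {I, J, K}" using O_IntUn(1)[OF F fin X Y idT[OF X] idT[OF Y]] IJK(1) by simp
    have u: "X \<union> Y \<in> {I, J, K}" using O_IntUn(2)[OF F fin X Y idT[OF X] idT[OF Y]] IJK(1) by simp
    have X': "X \<in> {I, J, K}" and Y': "Y \<in> {I, J, K}" using X Y IJK(1) by simp_all
    have n1: "X \<noteq> Y" using nc by auto
    have n2: "X \<inter> Y \<noteq> X" "X \<inter> Y \<noteq> Y" "X \<union> Y \<noteq> X" "X \<union> Y \<noteq> Y" using nc by auto
    have "X \<inter> Y = X \<union> Y" by (rule three_cases[OF X' Y' n1 i u n2])
    thus False using nc by blast
  qed
  from TE obtain A B where AB: "A \<in> T" "B \<in> T" "A \<noteq> B" "{A, B} \<in> Estar_O" by (elim bexE conjE)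
  have "\<exists>I' J'. {A, B} = {I', J'} \<and> poset_ideal I' \<and> poset_ideal J' \<and> I' \<noteq> J' \<and>
      is_k_face (order_polytope :: (real^'n::{finite,order}) set) 1 (convex hull {rho I', rho J'}) \<and>
      \<not> is_k_face (chain_polytope :: (real^'n::{finite,order}) set) 1 (convex hull {rho (maxs I'), rho (maxs J')})"
    using AB(4) unfolding Estar_O_def by (simp only: mem_Collect_eq)
  then obtain I' J' where E0: "{A, B} = {I', J'} \<and> poset_ideal I' \<and> poset_ideal J' \<and> I' \<noteq> J' \<and>
      is_k_face (order_polytope :: (real^'n::{finite,order}) set) 1 (convex hull {rho I', rho J'}) \<and>
      \<not> is_k_face (chain_polytope :: (real^'n::{finite,order}) set) 1 (convex hull {rho (maxs I'), rho (maxs J')})"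
    by (elim exE)
  note E = conjunct1[OF E0] conjunct1[OF conjunct2[OF E0]] conjunct1[OF conjunct2[OF conjunct2[OF E0]]]
    conjunct1[OF conjunct2[OF conjunct2[OF conjunct2[OF E0]]]]
    conjunct1[OF conjunct2[OF conjunct2[OF conjunct2[OF conjunct2[OF E0]]]]]
    conjunct2[OF conjunct2[OF conjunct2[OF conjunct2[OF conjunct2[OF E0]]]]]
  have IJT: "I' \<in> T" "J' \<in> T" using E(1) AB(1,2) by (metis doubleton_eq_iff)+
  from EO_form[OF E(2-6)] obtain Z where Z: "{} \<in> T" "Z \<in> T" "special Z"
    using IJT by blast
  obtain P Q where PQ: "T = {{}, P, Q}" "P \<noteq> {}" "Q \<noteq> {}" "P \<noteq> Q"
  proof -
    have "T = {{}, I, J, K}" using Z(1) IJK(1) by blast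
    show ?thesis
    proof (cases "I = {}")
      case True thus ?thesis using that[of J K] IJK by auto
    next
      case F1: False
      show ?thesis
      proof (cases "J = {}")
        case True thus ?thesis using that[of I K] IJK F1 by auto
      next
        case False
        hence "K = {}" using Z(1) IJK(1) F1 by auto
        thus ?thesis using that[of I J] IJK F1 False by auto
      qed
    qed
  qed
  have PQT: "P \<in> T" "Q \<in> T" using PQ by auto
  have spec: "special P \<or> special Q"
  proof -
    obtain m S where mS: "S \<subseteq> lev m" "2 \<le> card S" "Z = low m \<union> S" using Z(3) unfolding special_def by blast
    have "S \<noteq> {}" using mS(2) by auto
    hence "Z \<noteq> {}" using mS(3) by blast
    hence "Z = P \<or> Z = Q" using Z(2) PQ(1) by blast
    thus ?thesis using Z(3) by blast
  qed
  show ?thesis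
  proof (cases "P \<subseteq> Q")
    case True
    have "T = {{}, P, Q} \<and> poset_ideal P \<and> poset_ideal Q \<and> P \<noteq> {} \<and> P \<subseteq> Q \<and> P \<noteq> Q \<and>
     convex hull (rho ` T) face_of (order_polytope :: (real^'n::{finite,order}) set) \<and> (special P \<or> special Q)"
      by (intro conjI PQ(1) idT PQT PQ(2) True PQ(4) F spec)
    thus ?thesis by blast
  next
    case False
    hence QP: "Q \<subseteq> P" using comp[OF PQT] by blast
    have T2: "T = {{}, Q, P}" using PQ(1) by blast
    have "T = {{}, Q, P} \<and> poset_ideal Q \<and> poset_ideal P \<and> Q \<noteq> {} \<and> Q \<subseteq> P \<and> Q \<noteq> P \<and>
     convex hull (rho ` T) face_of (order_polytope :: (real^'n::{finite,order}) set) \<and> (special Q \<or> special P)"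
      using spec PQ(4) by (intro conjI T2 idT PQT PQ(3) QP F) auto
    thus ?thesis by blast
  qed
qed

end

context wr begin

definition base :: "nat \<Rightarrow> 'n set \<Rightarrow> nat \<Rightarrow> 'n set \<Rightarrow> bool" where
  "base k R m S \<longleftrightarrow> R \<subseteq> lev k \<and> R \<noteq> {} \<and> S \<subseteq> lev m \<and> S \<noteq> {}"

definition I1 :: "nat \<Rightarrow> 'n set \<Rightarrow> nat \<Rightarrow> 'n set \<Rightarrow> 'n set set \<Rightarrow> bool" where
  "I1 k R m S Z \<longleftrightarrow> 1 \<le> m \<and> 2 \<le> card S \<and> k = m \<and> (\<exists>x\<in>S. R = S - {x}) \<and> Z = {lev (m - 1), S, R}"
definition I2 :: "nat \<Rightarrow> 'n set \<Rightarrow> nat \<Rightarrow> 'n set \<Rightarrow> 'n set set \<Rightarrow> bool" where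
  "I2 k R m S Z \<longleftrightarrow> 1 \<le> m \<and> 2 \<le> card S \<and> k + 2 \<le> m \<and> Z = {lev (m - 1), S, R}"
definition I3 :: "nat \<Rightarrow> 'n set \<Rightarrow> nat \<Rightarrow> 'n set \<Rightarrow> 'n set set \<Rightarrow> bool" where
  "I3 k R m S Z \<longleftrightarrow> 1 \<le> m \<and> 2 \<le> card S \<and> k + 1 = m \<and> R \<noteq> lev k \<and> (\<exists>y. R = {y}) \<and>
     Z = {lev (m - 1), S, lev (m - 1) - R}"
definition I4 :: "nat \<Rightarrow> 'n set \<Rightarrow> nat \<Rightarrow> 'n set \<Rightarrow> 'n set set \<Rightarrow> bool" where
  "I4 k R m S Z \<longleftrightarrow> 2 \<le> m \<and> 2 \<le> card S \<and> k + 1 = m \<and> R \<noteq> lev k \<and> 2 \<le> card R \<and>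
     Z = {lev (m - 2), R, S}"
definition I5 :: "nat \<Rightarrow> 'n set \<Rightarrow> nat \<Rightarrow> 'n set \<Rightarrow> 'n set set \<Rightarrow> bool" where
  "I5 k R m S Z \<longleftrightarrow> 1 \<le> k \<and> 2 \<le> card R \<and> k + 1 \<le> m \<and> card S = 1 \<and> Z = {lev (k - 1), R, S}"

definition Img :: "nat \<Rightarrow> 'n set \<Rightarrow> nat \<Rightarrow> 'n set \<Rightarrow> 'n set set \<Rightarrow> bool" where
  "Img k R m S Z \<longleftrightarrow> base k R m S \<and> (I1 k R m S Z \<or> I2 k R m S Z \<or> I3 k R m S Z \<or> I4 k R m S Z \<or> I5 k R m S Z)"

lemma DC_I: "Z \<in> Delta_C \<Longrightarrow> A \<in> Z \<Longrightarrow> B \<in> Z \<Longrightarrow> A \<noteq> B \<Longrightarrow> {A, B} \<in> Estar_C \<Longrightarrow> Z \<in> Deltastar_C"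
  unfolding Deltastar_C_def by blast

lemma lev_neq: "A \<subseteq> lev a \<Longrightarrow> A \<noteq> {} \<Longrightarrow> B \<subseteq> lev b \<Longrightarrow> a \<noteq> b \<Longrightarrow> A \<noteq> B"
  using lev_same by blast

lemma card2_ne: "2 \<le> card S \<Longrightarrow> S \<noteq> {}" by auto

lemma card2_other:
  assumes "2 \<le> card S" shows "S - {x} \<noteq> {}"
proof
  assume "S - {x} = {}"
  hence "S \<subseteq> {x}" by blast
  hence "card S \<le> 1" using card_mono[of "{x}" S] by simp
  thus False using assms by simp
qed

lemma Img_in:
  assumes "Img k R m S Z" shows "Z \<in> Deltastar_C"
proof -
  have b: "R \<subseteq> lev k" "R \<noteq> {}" "S \<subseteq> lev m" "S \<noteq> {}" using assms unfolding Img_def base_def by auto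
  have cases: "I1 k R m S Z \<or> I2 k R m S Z \<or> I3 k R m S Z \<or> I4 k R m S Z \<or> I5 k R m S Z"
    using assms unfolding Img_def by auto
  show ?thesis
  proof -
    { assume h: "I1 k R m S Z"
      then obtain x where x: "x \<in> S" "R = S - {x}" and m: "1 \<le> m" and c: "2 \<le> card S"
        and Z: "Z = {lev (m - 1), S, R}" unfolding I1_def by blast
      have L: "lev (m - 1) \<noteq> {}" using lev_ne'[OF b(3,4), of "m - 1"] by simp
      have "{S, S - {x}, lev (m - 1)} \<in> Delta_C"
        by (rule CT2[OF b(3) x(1) card2_other[OF c] _ L]) (use m in auto)
      moreover have "{S, S - {x}, lev (m - 1)} = Z" using Z x by auto
      ultimately have "Z \<in> Delta_C" by simp
      moreover have "{lev (m - 1), S} \<in> Estar_C" by (rule EC_mem[OF m b(3) c])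
      moreover have "lev (m - 1) \<noteq> S" using lev_neq[OF _ L b(3), of "m - 1"] m by auto
      ultimately have ?thesis using Z by (intro DC_I) auto }
    moreover
    { assume h: "I2 k R m S Z"
      hence m: "1 \<le> m" and c: "2 \<le> card S" and km: "k + 2 \<le> m" and Z: "Z = {lev (m - 1), S, R}"
        unfolding I2_def by auto
      have L: "lev (m - 1) \<noteq> {}" using lev_ne'[OF b(3,4), of "m - 1"] by simp
      have "Z \<in> Delta_C" unfolding Z
        by (rule CT3[OF _ L b(3,4) b(1,2)]) (use km in auto)
      moreover have "{lev (m - 1), S} \<in> Estar_C" by (rule EC_mem[OF m b(3) c])
      moreover have "lev (m - 1) \<noteq> S" using lev_neq[OF _ L b(3), of "m - 1"] m by auto
      ultimately have ?thesis using Z by (intro DC_I) auto }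
    moreover
    { assume h: "I3 k R m S Z"
      then obtain y where m: "1 \<le> m" and c: "2 \<le> card S" and km: "k + 1 = m" and Rn: "R \<noteq> lev k"
        and y: "R = {y}" and Z: "Z = {lev (m - 1), S, lev (m - 1) - R}"
        unfolding I3_def by blast
      have L: "lev (m - 1) \<noteq> {}" using lev_ne'[OF b(3,4), of "m - 1"] by simp
      have k: "k = m - 1" using km by simp
      have yl: "y \<in> lev (m - 1)" using b(1) y k by auto
      have o: "lev (m - 1) - {y} \<noteq> {}" using Rn y yl k by auto
      have "{lev (m - 1), lev (m - 1) - {y}, S} \<in> Delta_C"
        by (rule CT2[OF _ yl o b(3,4)]) (use m in auto)
      moreover have "{lev (m - 1), lev (m - 1) - {y}, S} = Z" using Z y by auto
      ultimately have "Z \<in> Delta_C" by simp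
      moreover have "{lev (m - 1), S} \<in> Estar_C" by (rule EC_mem[OF m b(3) c])
      moreover have "lev (m - 1) \<noteq> S" using lev_neq[OF _ L b(3), of "m - 1"] m by auto
      ultimately have ?thesis using Z by (intro DC_I) auto }
    moreover
    { assume h: "I4 k R m S Z"
      hence m: "2 \<le> m" and c: "2 \<le> card S" and km: "k + 1 = m" and cR: "2 \<le> card R"
        and Z: "Z = {lev (m - 2), R, S}" unfolding I4_def by auto
      have L: "lev (m - 2) \<noteq> {}" using lev_ne'[OF b(3,4), of "m - 2"] by simp
      have "Z \<in> Delta_C" unfolding Z
        by (rule CT3[OF _ L b(1,2) b(3,4)]) (use km m in auto)
      moreover have "{lev (k - 1), R} \<in> Estar_C" by (rule EC_mem[OF _ b(1) cR]) (use km m in auto)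
      moreover have "k - 1 = m - 2" using km by simp
      moreover have "lev (m - 2) \<noteq> R" using lev_neq[OF _ L b(1), of "m - 2"] km m by auto
      ultimately have ?thesis using Z by (intro DC_I) auto }
    moreover
    { assume h: "I5 k R m S Z"
      hence k: "1 \<le> k" and cR: "2 \<le> card R" and km: "k + 1 \<le> m" and Z: "Z = {lev (k - 1), R, S}"
        unfolding I5_def by auto
      have L: "lev (k - 1) \<noteq> {}" using lev_ne'[OF b(1,2), of "k - 1"] by simp
      have "Z \<in> Delta_C" unfolding Z
        by (rule CT3[OF _ L b(1,2) b(3,4)]) (use km k in auto)
      moreover have "{lev (k - 1), R} \<in> Estar_C" by (rule EC_mem[OF k b(1) cR])
      moreover have "lev (k - 1) \<noteq> R" using lev_neq[OF _ L b(1), of "k - 1"] k by auto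
      ultimately have ?thesis using Z by (intro DC_I) auto }
    ultimately show ?thesis using cases by blast
  qed
qed

end

context wr begin

lemma special_canon:
  assumes "S \<subseteq> lev m" "S \<noteq> {}"
  shows "special (low m \<union> S) \<longleftrightarrow> 1 \<le> m \<and> 2 \<le> card S"
proof
  assume "special (low m \<union> S)"
  then obtain m' S' where h: "1 \<le> m'" "S' \<subseteq> lev m'" "2 \<le> card S'" "low m \<union> S = low m' \<union> S'"
    unfolding special_def by blast
  have "S' \<noteq> {}" using h(3) by auto
  hence "m = m'" "S = S'" using canon_unique[OF assms h(2) _ h(4)] by auto
  thus "1 \<le> m \<and> 2 \<le> card S" using h by simp
next
  assume "1 \<le> m \<and> 2 \<le> card S"
  thus "special (low m \<union> S)" unfolding special_def using assms by blast
qed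

lemma ideal_empty: "poset_ideal {}" by (simp add: poset_ideal_def)

lemma card1_eq: "card S = 1 \<Longrightarrow> \<exists>y. S = {y}"
  by (metis card_1_singletonE)

lemma DO_img:
  assumes T: "T \<in> Deltastar_O"
  shows "\<exists>k R m S Z. T = {{}, low k \<union> R, low m \<union> S} \<and> Img k R m S Z"
proof -
  obtain M T' where MT: "T = {{}, M, T'}" "poset_ideal M" "poset_ideal T'" "M \<noteq> {}" "M \<subseteq> T'" "M \<noteq> T'"
    and F: "convex hull (rho ` T) face_of (order_polytope :: (real^'n::{finite,order}) set)"
    and sp: "special M \<or> special T'"
    using DO_shape[OF T] by blast
  have fin: "finite T" using MT(1) by simp
  have T'ne: "T' \<noteq> {}" using MT by blast
  obtain k R where R: "R \<subseteq> lev k" "R \<noteq> {}" "M = low k \<union> R" using ideal_canon[OF MT(2,4)] by blast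
  obtain m S where S: "S \<subseteq> lev m" "S \<noteq> {}" "T' = low m \<union> S" using ideal_canon[OF MT(3) T'ne] by blast
  have b: "base k R m S" unfolding base_def using R S by blast
  have inT: "{} \<in> T" "M \<in> T" "T' \<in> T" using MT(1) by auto
  have km: "k \<le> m" using canon_sub(1)[OF R(1,2) S(1)] MT(5) R(3) S(3) by blast
  have g1: "card R = 1" if "k = 0"
  proof -
    have MR: "M = R" using R that by (simp add: low_def)
    obtain x where x: "x \<in> R" using R by blast
    have "insert x {} \<in> T"
      by (rule O_gap[OF F fin inT(1) ideal_empty inT(2) MT(2), where j = 0])
        (use MR R(1) that x in auto)
    hence "{x} = M \<or> {x} = T'" using MT(1) by auto
    moreover have "{x} \<noteq> T'" using MT(4,5,6) x MR by blast
    ultimately show ?thesis using MR by auto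
  qed
  have g2: "insert x M = T'" if "T' - M \<subseteq> lev j" "x \<in> T'" "x \<notin> M" for j x
  proof -
    have "insert x M \<in> T" by (rule O_gap[OF F fin inT(2) MT(2) inT(3) MT(3) MT(5) that])
    thus ?thesis using MT(1) that(3) by auto
  qed
  have fS: "finite S" "finite R" by simp_all
  show ?thesis
  proof (cases "special T'")
    case True
    hence m1: "1 \<le> m" and cS: "2 \<le> card S" using special_canon[OF S(1,2)] S(3) by auto
    show ?thesis
    proof (cases "k = m")
      case True
      have RS: "R \<subseteq> S" using canon_sub(2)[OF R(1,2) S(1)] MT(5) R(3) S(3) True by blast
      have "R \<noteq> S" using MT(6) R(3) S(3) True by blast
      then obtain x where x: "x \<in> S" "x \<notin> R" using RS by blast
      have xM: "x \<notin> M" using x R(3) S(1) True by (auto simp: low_def lev_def)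
      have "insert x M = T'"
        by (rule g2[of m x]) (use R(3) S(3) S(1) True x xM in auto)
      hence "low m \<union> insert x R = low m \<union> S" using R(3) S(3) True by auto
      hence "insert x R = S" using canon_unique(2)[of "insert x R" m S m] R(1) True x S(1,2) by auto
      hence "R = S - {x}" using x by auto
      hence "I1 k R m S {lev (m - 1), S, R}" unfolding I1_def using m1 cS True x by blast
      thus ?thesis unfolding Img_def using b MT(1) R(3) S(3) by blast
    next
      case knm: False
      show ?thesis
      proof (cases "k + 2 \<le> m")
        case True
        hence "I2 k R m S {lev (m - 1), S, R}" unfolding I2_def using m1 cS by blast
        thus ?thesis unfolding Img_def using b MT(1) R(3) S(3) by blast
      next
        case False
        hence k1: "k + 1 = m" using km knm by simp
        have Rl: "R \<noteq> lev k"
        proof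
          assume Rk: "R = lev k"
          have Ml: "M = low m" using R(3) Rk low_Suc[of k] k1 by simp
          obtain x where x: "x \<in> S" using S by blast
          have xM: "x \<notin> M" using x Ml S(1) by (auto simp: low_def lev_def)
          have "insert x M = T'" by (rule g2[of m x]) (use Ml S x xM in auto)
          hence "low m \<union> {x} = low m \<union> S" using Ml S(3) by simp
          hence "{x} = S" using canon_unique(2)[of "{x}" m S m] x S(1,2) by auto
          thus False using cS by auto
        qed
        show ?thesis
        proof (cases "card R = 1")
          case True
          then obtain y where y: "R = {y}" using card1_eq by blast
          have "I3 k R m S {lev (m - 1), S, lev (m - 1) - R}" unfolding I3_def using m1 cS k1 Rl y by blast
          thus ?thesis unfolding Img_def using b MT(1) R(3) S(3) by blast
        next
          case False
          hence cR: "2 \<le> card R" using card_ge2[OF fS(2) R(2)] by simp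
          have "k \<noteq> 0" using g1 False by blast
          hence m2: "2 \<le> m" using k1 by simp
          have "I4 k R m S {lev (m - 2), R, S}" unfolding I4_def using m2 cS k1 Rl cR by blast
          thus ?thesis unfolding Img_def using b MT(1) R(3) S(3) by blast
        qed
      qed
    qed
  next
    case False
    hence spM: "special M" using sp by blast
    hence k1: "1 \<le> k" and cR: "2 \<le> card R" using special_canon[OF R(1,2)] R(3) by auto
    have cS: "card S = 1"
    proof (rule ccontr)
      assume "card S \<noteq> 1"
      hence "2 \<le> card S" using card_ge2[OF fS(1) S(2)] by simp
      hence "special T'" using special_canon[OF S(1,2)] S(3) km k1 by simp
      thus False using False by blast
    qed
    have "k \<noteq> m"
    proof
      assume "k = m"
      hence "R \<subseteq> S" using canon_sub(2)[OF R(1,2) S(1)] MT(5) R(3) S(3) by blast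
      hence "card R \<le> card S" by (simp add: card_mono)
      thus False using cR cS by simp
    qed
    hence "k + 1 \<le> m" using km by simp
    hence "I5 k R m S {lev (k - 1), R, S}" unfolding I5_def using k1 cR cS by blast
    thus ?thesis unfolding Img_def using b MT(1) R(3) S(3) by blast
  qed
qed

end

context wr begin

definition TopP :: "'n set set \<Rightarrow> 'n set \<Rightarrow> nat \<Rightarrow> bool" where
  "TopP Z S m \<longleftrightarrow> S \<in> Z \<and> S \<subseteq> lev m \<and> S \<noteq> {} \<and>
     (\<forall>Y\<in>Z. Y \<noteq> S \<longrightarrow> (\<exists>a<m. Y \<subseteq> lev a \<and> Y \<noteq> {}) \<or> (Y \<subseteq> lev m \<and> card Y < card S))"

lemma TopP_unique:
  assumes "TopP Z S1 m1" "TopP Z S2 m2" shows "S1 = S2 \<and> m1 = m2"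
proof -
  have h1: "S1 \<in> Z" "S1 \<subseteq> lev m1" "S1 \<noteq> {}" "S2 \<in> Z" "S2 \<subseteq> lev m2" "S2 \<noteq> {}"
    using assms unfolding TopP_def by blast+
  show ?thesis
  proof (cases "S1 = S2")
  case True
  hence "m1 = m2" using lev_same[OF h1(2) _ h1(3), of m2] h1(5) by simp
  thus ?thesis using True by simp
next
  case False
  have A: "(\<exists>a<m1. S2 \<subseteq> lev a \<and> S2 \<noteq> {}) \<or> (S2 \<subseteq> lev m1 \<and> card S2 < card S1)"
    using assms(1) h1(4) False unfolding TopP_def by auto
  have B: "(\<exists>a<m2. S1 \<subseteq> lev a \<and> S1 \<noteq> {}) \<or> (S1 \<subseteq> lev m2 \<and> card S1 < card S2)"
    using assms(2) h1(1) False unfolding TopP_def by auto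
  have A': "m2 < m1 \<or> (m2 = m1 \<and> card S2 < card S1)"
    using A lev_same[OF _ h1(5) h1(6)] by blast
  have B': "m1 < m2 \<or> (m1 = m2 \<and> card S1 < card S2)"
    using B lev_same[OF _ h1(2) h1(3)] by blast
  show ?thesis using A' B' by linarith
qed
qed

lemma lev_m1_ne: "S \<subseteq> lev m \<Longrightarrow> S \<noteq> {} \<Longrightarrow> j \<le> m \<Longrightarrow> lev j \<noteq> {}"
  using lev_ne' by blast

lemma Img_top:
  assumes "Img k R m S Z" shows "TopP Z S m"
proof -
  have b: "R \<subseteq> lev k" "R \<noteq> {}" "S \<subseteq> lev m" "S \<noteq> {}" using assms unfolding Img_def base_def by auto
  have cases: "I1 k R m S Z \<or> I2 k R m S Z \<or> I3 k R m S Z \<or> I4 k R m S Z \<or> I5 k R m S Z"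
    using assms unfolding Img_def by auto
  have L: "lev j \<noteq> {}" if "j \<le> m" for j using lev_m1_ne[OF b(3,4) that] .
  { assume "I1 k R m S Z"
    then obtain x where x: "x \<in> S" "R = S - {x}" and m: "1 \<le> m" and Z: "Z = {lev (m - 1), S, R}"
      unfolding I1_def by blast
    have "card (S - {x}) < card S" by (rule card_Diff1_less[OF _ x(1)]) simp
    hence "card R < card S" using x(2) by simp
    moreover have "R \<subseteq> lev m" using x b by auto
    moreover have "\<exists>a<m. lev (m - 1) \<subseteq> lev a \<and> lev (m - 1) \<noteq> {}"
      using L[of "m - 1"] m by (intro exI[of _ "m - 1"]) auto
    ultimately have ?thesis unfolding TopP_def using Z b by auto }
  moreover
  { assume "I2 k R m S Z"
    hence m: "1 \<le> m" "k + 2 \<le> m" and Z: "Z = {lev (m - 1), S, R}" unfolding I2_def by auto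
    have "\<exists>a<m. R \<subseteq> lev a \<and> R \<noteq> {}" using b m by (intro exI[of _ k]) auto
    moreover have "\<exists>a<m. lev (m - 1) \<subseteq> lev a \<and> lev (m - 1) \<noteq> {}"
      using L[of "m - 1"] m by (intro exI[of _ "m - 1"]) auto
    ultimately have ?thesis unfolding TopP_def using Z b by auto }
  moreover
  { assume "I3 k R m S Z"
    then obtain y where m: "1 \<le> m" "k + 1 = m" and Rn: "R \<noteq> lev k" and y: "R = {y}"
      and Z: "Z = {lev (m - 1), S, lev (m - 1) - R}" unfolding I3_def by blast
    have k: "k = m - 1" using m by simp
    have "lev (m - 1) - R \<noteq> {}" using Rn y b(1) k by auto
    hence "\<exists>a<m. (lev (m - 1) - R) \<subseteq> lev a \<and> lev (m - 1) - R \<noteq> {}" using m by (intro exI[of _ "m - 1"]) auto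
    moreover have "\<exists>a<m. lev (m - 1) \<subseteq> lev a \<and> lev (m - 1) \<noteq> {}"
      using L[of "m - 1"] m by (intro exI[of _ "m - 1"]) auto
    ultimately have ?thesis unfolding TopP_def using Z b by auto }
  moreover
  { assume "I4 k R m S Z"
    hence m: "2 \<le> m" "k + 1 = m" and Z: "Z = {lev (m - 2), R, S}" unfolding I4_def by auto
    have "\<exists>a<m. R \<subseteq> lev a \<and> R \<noteq> {}" using b m by (intro exI[of _ k]) auto
    moreover have "\<exists>a<m. lev (m - 2) \<subseteq> lev a \<and> lev (m - 2) \<noteq> {}"
      using L[of "m - 2"] m by (intro exI[of _ "m - 2"]) auto
    ultimately have ?thesis unfolding TopP_def using Z b by auto }
  moreover
  { assume "I5 k R m S Z"
    hence m: "1 \<le> k" "k + 1 \<le> m" and Z: "Z = {lev (k - 1), R, S}" unfolding I5_def by auto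
    have "\<exists>a<m. R \<subseteq> lev a \<and> R \<noteq> {}" using b m by (intro exI[of _ k]) auto
    moreover have "\<exists>a<m. lev (k - 1) \<subseteq> lev a \<and> lev (k - 1) \<noteq> {}"
      using L[of "k - 1"] m by (intro exI[of _ "k - 1"]) auto
    ultimately have ?thesis unfolding TopP_def using Z b by auto }
  ultimately show ?thesis using cases by blast
qed

lemma levmem:
  assumes "W \<in> {A, B, C}" "W \<subseteq> lev w" "W \<noteq> {}" "A \<subseteq> lev a" "B \<subseteq> lev b" "C \<subseteq> lev c"
  shows "(W = A \<and> w = a) \<or> (W = B \<and> w = b) \<or> (W = C \<and> w = c)"
  using assms lev_same[OF _ assms(2,3)] by blast

end

context wr begin

lemma I1D1: "I1 k R m S Z \<Longrightarrow> 1 \<le> m"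
  unfolding I1_def by (elim conjE) assumption
lemma I1D2: "I1 k R m S Z \<Longrightarrow> 2 \<le> card S"
  unfolding I1_def by (elim conjE) assumption
lemma I1D3: "I1 k R m S Z \<Longrightarrow> k = m"
  unfolding I1_def by (elim conjE) assumption
lemma I1D4: "I1 k R m S Z \<Longrightarrow> \<exists>x\<in>S. R = S - {x}"
  unfolding I1_def by (elim conjE) assumption
lemma I1D5: "I1 k R m S Z \<Longrightarrow> Z = {lev (m - 1), S, R}"
  unfolding I1_def by (elim conjE) assumption
lemma I2D1: "I2 k R m S Z \<Longrightarrow> 1 \<le> m"
  unfolding I2_def by (elim conjE) assumption
lemma I2D2: "I2 k R m S Z \<Longrightarrow> 2 \<le> card S"
  unfolding I2_def by (elim conjE) assumption
lemma I2D3: "I2 k R m S Z \<Longrightarrow> k + 2 \<le> m"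
  unfolding I2_def by (elim conjE) assumption
lemma I2D4: "I2 k R m S Z \<Longrightarrow> Z = {lev (m - 1), S, R}"
  unfolding I2_def by (elim conjE) assumption
lemma I3D1: "I3 k R m S Z \<Longrightarrow> 1 \<le> m"
  unfolding I3_def by (elim conjE) assumption
lemma I3D2: "I3 k R m S Z \<Longrightarrow> 2 \<le> card S"
  unfolding I3_def by (elim conjE) assumption
lemma I3D3: "I3 k R m S Z \<Longrightarrow> k + 1 = m"
  unfolding I3_def by (elim conjE) assumption
lemma I3D4: "I3 k R m S Z \<Longrightarrow> R \<noteq> lev k"
  unfolding I3_def by (elim conjE) assumption
lemma I3D5: "I3 k R m S Z \<Longrightarrow> \<exists>y. R = {y}"
  unfolding I3_def by (elim conjE) assumption
lemma I3D6: "I3 k R m S Z \<Longrightarrow> Z = {lev (m - 1), S, lev (m - 1) - R}"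
  unfolding I3_def by (elim conjE) assumption
lemma I4D1: "I4 k R m S Z \<Longrightarrow> 2 \<le> m"
  unfolding I4_def by (elim conjE) assumption
lemma I4D2: "I4 k R m S Z \<Longrightarrow> 2 \<le> card S"
  unfolding I4_def by (elim conjE) assumption
lemma I4D3: "I4 k R m S Z \<Longrightarrow> k + 1 = m"
  unfolding I4_def by (elim conjE) assumption
lemma I4D4: "I4 k R m S Z \<Longrightarrow> R \<noteq> lev k"
  unfolding I4_def by (elim conjE) assumption
lemma I4D5: "I4 k R m S Z \<Longrightarrow> 2 \<le> card R"
  unfolding I4_def by (elim conjE) assumption
lemma I4D6: "I4 k R m S Z \<Longrightarrow> Z = {lev (m - 2), R, S}"
  unfolding I4_def by (elim conjE) assumption
lemma I5D1: "I5 k R m S Z \<Longrightarrow> 1 \<le> k"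
  unfolding I5_def by (elim conjE) assumption
lemma I5D2: "I5 k R m S Z \<Longrightarrow> 2 \<le> card R"
  unfolding I5_def by (elim conjE) assumption
lemma I5D3: "I5 k R m S Z \<Longrightarrow> k + 1 \<le> m"
  unfolding I5_def by (elim conjE) assumption
lemma I5D4: "I5 k R m S Z \<Longrightarrow> card S = 1"
  unfolding I5_def by (elim conjE) assumption
lemma I5D5: "I5 k R m S Z \<Longrightarrow> Z = {lev (k - 1), R, S}"
  unfolding I5_def by (elim conjE) assumption

lemma baseD: "base k R m S \<Longrightarrow> R \<subseteq> lev k" "base k R m S \<Longrightarrow> R \<noteq> {}"
  "base k R m S \<Longrightarrow> S \<subseteq> lev m" "base k R m S \<Longrightarrow> S \<noteq> {}"
  unfolding base_def by simp_all

lemma inj11: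
  assumes A: "I1 k1 R1 m S Z" and B: "I1 k2 R2 m S Z" and b1: "base k1 R1 m S" and b2: "base k2 R2 m S"
  shows "R1 = R2"
proof -
  obtain x1 where x1: "x1 \<in> S" "R1 = S - {x1}" using I1D4[OF A] by blast
  have m: "1 \<le> m" using I1D1[OF A] .
  have R1m: "R1 \<subseteq> lev m" using baseD(1)[OF b1] I1D3[OF A] by simp
  have R2m: "R2 \<subseteq> lev m" using baseD(1)[OF b2] I1D3[OF B] by simp
  have "R1 \<in> {lev (m - 1), S, R2}" using I1D5[OF A] I1D5[OF B] by (metis insertI1 insertI2)
  from levmem[OF this R1m baseD(2)[OF b1] order_refl baseD(3)[OF b1] R2m]
  have D: "(R1 = lev (m - 1) \<and> m = m - 1) \<or> (R1 = S \<and> m = m) \<or> (R1 = R2 \<and> m = m)" .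
  moreover have "m \<noteq> m - 1" using m by simp
  moreover have "R1 \<noteq> S" using x1 by blast
  ultimately show ?thesis by blast
qed

lemma inj22:
  assumes A: "I2 k1 R1 m S Z" and B: "I2 k2 R2 m S Z" and b1: "base k1 R1 m S" and b2: "base k2 R2 m S"
  shows "R1 = R2"
proof -
  have m: "1 \<le> m" "k1 + 2 \<le> m" using I2D1[OF A] I2D3[OF A] by auto
  have "R1 \<in> {lev (m - 1), S, R2}" using I2D4[OF A] I2D4[OF B] by (metis insertI1 insertI2)
  from levmem[OF this baseD(1,2)[OF b1] order_refl baseD(3)[OF b1] baseD(1)[OF b2]]
  have D: "(R1 = lev (m - 1) \<and> k1 = m - 1) \<or> (R1 = S \<and> k1 = m) \<or> (R1 = R2 \<and> k1 = k2)" .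
  moreover have "k1 \<noteq> m - 1" "k1 \<noteq> m" using m by simp_all
  ultimately show ?thesis by blast
qed

lemma inj33:
  assumes A: "I3 k1 R1 m S Z" and B: "I3 k2 R2 m S Z" and b1: "base k1 R1 m S" and b2: "base k2 R2 m S"
  shows "R1 = R2"
proof -
  have m: "1 \<le> m" "k1 + 1 = m" "k2 + 1 = m" using I3D1[OF A] I3D3[OF A] I3D3[OF B] by auto
  have Rn: "R1 \<noteq> lev k1" using I3D4[OF A] .
  have kk: "k1 = m - 1" "k2 = m - 1" using m by simp_all
  have R1l: "R1 \<subseteq> lev (m - 1)" using baseD(1)[OF b1] kk by simp
  have R2l: "R2 \<subseteq> lev (m - 1)" using baseD(1)[OF b2] kk by simp
  have R1n: "R1 \<noteq> {}" using baseD(2)[OF b1] .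
  have W: "lev (m - 1) - R1 \<subseteq> lev (m - 1)" by blast
  have Wn: "lev (m - 1) - R1 \<noteq> {}" using R1l Rn m by auto
  have W2: "lev (m - 1) - R2 \<subseteq> lev (m - 1)" by blast
  have "lev (m - 1) - R1 \<in> {lev (m - 1), S, lev (m - 1) - R2}" using I3D6[OF A] I3D6[OF B] by (metis insertI1 insertI2)
  from levmem[OF this W Wn order_refl baseD(3)[OF b1] W2]
  have D: "(lev (m - 1) - R1 = lev (m - 1) \<and> m - 1 = m - 1) \<or> (lev (m - 1) - R1 = S \<and> m - 1 = m) \<or>
     (lev (m - 1) - R1 = lev (m - 1) - R2 \<and> m - 1 = m - 1)" .
  moreover have "lev (m - 1) - R1 \<noteq> lev (m - 1)" using R1l R1n by blast
  moreover have "m - 1 \<noteq> m" using m by simp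
  ultimately have "lev (m - 1) - R1 = lev (m - 1) - R2" by blast
  thus ?thesis using R1l R2l by blast
qed

lemma inj44:
  assumes A: "I4 k1 R1 m S Z" and B: "I4 k2 R2 m S Z" and b1: "base k1 R1 m S" and b2: "base k2 R2 m S"
  shows "R1 = R2"
proof -
  have m: "2 \<le> m" "k1 + 1 = m" "k2 + 1 = m" using I4D1[OF A] I4D3[OF A] I4D3[OF B] by auto
  have "R1 \<in> {lev (m - 2), R2, S}" using I4D6[OF A] I4D6[OF B] by (metis insertI1 insertI2)
  from levmem[OF this baseD(1,2)[OF b1] order_refl baseD(1)[OF b2] baseD(3)[OF b1]]
  have D: "(R1 = lev (m - 2) \<and> k1 = m - 2) \<or> (R1 = R2 \<and> k1 = k2) \<or> (R1 = S \<and> k1 = m)" .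
  moreover have "k1 \<noteq> m - 2" "k1 \<noteq> m" using m by simp_all
  ultimately show ?thesis by blast
qed

lemma inj55:
  assumes A: "I5 k1 R1 m S Z" and B: "I5 k2 R2 m S Z" and b1: "base k1 R1 m S" and b2: "base k2 R2 m S"
  shows "R1 = R2"
proof -
  have m: "1 \<le> k1" "k1 + 1 \<le> m" "1 \<le> k2" "k2 + 1 \<le> m"
    using I5D1[OF A] I5D3[OF A] I5D1[OF B] I5D3[OF B] by auto
  have "R1 \<in> {lev (k2 - 1), R2, S}" using I5D5[OF A] I5D5[OF B] by (metis insertI1 insertI2)
  from levmem[OF this baseD(1,2)[OF b1] order_refl baseD(1)[OF b2] baseD(3)[OF b1]]
  have A1: "(R1 = lev (k2 - 1) \<and> k1 = k2 - 1) \<or> (R1 = R2 \<and> k1 = k2) \<or> (R1 = S \<and> k1 = m)" .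
  have "R2 \<in> {lev (k1 - 1), R1, S}" using I5D5[OF A] I5D5[OF B] by (metis insertI1 insertI2)
  from levmem[OF this baseD(1,2)[OF b2] order_refl baseD(1)[OF b1] baseD(3)[OF b1]]
  have B1: "(R2 = lev (k1 - 1) \<and> k2 = k1 - 1) \<or> (R2 = R1 \<and> k2 = k1) \<or> (R2 = S \<and> k2 = m)" .
  have n: "k1 \<noteq> m" "k2 \<noteq> m" "\<not> (k1 = k2 - 1 \<and> k2 = k1 - 1)" "\<not> (k1 = k2 - 1 \<and> k2 = k1)"
     "\<not> (k2 = k1 - 1 \<and> k1 = k2)" using m by auto
  show ?thesis using A1 B1 n by blast
qed

lemma x12:
  assumes A: "I1 k1 R1 m S Z" and B: "I2 k2 R2 m S Z" and b1: "base k1 R1 m S" and b2: "base k2 R2 m S"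
  shows False
proof -
  obtain x1 where x1: "x1 \<in> S" "R1 = S - {x1}" using I1D4[OF A] by blast
  have m: "1 \<le> m" "k2 + 2 \<le> m" using I1D1[OF A] I2D3[OF B] by auto
  have R1m: "R1 \<subseteq> lev m" using baseD(1)[OF b1] I1D3[OF A] by simp
  have "R1 \<in> {lev (m - 1), S, R2}" using I1D5[OF A] I2D4[OF B] by (metis insertI1 insertI2)
  from levmem[OF this R1m baseD(2)[OF b1] order_refl baseD(3)[OF b1] baseD(1)[OF b2]]
  have D: "(R1 = lev (m - 1) \<and> m = m - 1) \<or> (R1 = S \<and> m = m) \<or> (R1 = R2 \<and> m = k2)" .
  moreover have "m \<noteq> m - 1" "m \<noteq> k2" using m by simp_all
  moreover have "R1 \<noteq> S" using x1 by blast
  ultimately show False by blast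
qed

lemma x13:
  assumes A: "I1 k1 R1 m S Z" and B: "I3 k2 R2 m S Z" and b1: "base k1 R1 m S" and b2: "base k2 R2 m S"
  shows False
proof -
  obtain x1 where x1: "x1 \<in> S" "R1 = S - {x1}" using I1D4[OF A] by blast
  have m: "1 \<le> m" using I1D1[OF A] .
  have R1m: "R1 \<subseteq> lev m" using baseD(1)[OF b1] I1D3[OF A] by simp
  have W: "lev (m - 1) - R2 \<subseteq> lev (m - 1)" by blast
  have "R1 \<in> {lev (m - 1), S, lev (m - 1) - R2}" using I1D5[OF A] I3D6[OF B] by (metis insertI1 insertI2)
  from levmem[OF this R1m baseD(2)[OF b1] order_refl baseD(3)[OF b1] W]
  have D: "(R1 = lev (m - 1) \<and> m = m - 1) \<or> (R1 = S \<and> m = m) \<or> (R1 = lev (m - 1) - R2 \<and> m = m - 1)" .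
  moreover have "m \<noteq> m - 1" using m by simp_all
  moreover have "R1 \<noteq> S" using x1 by blast
  ultimately show False by blast
qed

lemma x23:
  assumes A: "I2 k1 R1 m S Z" and B: "I3 k2 R2 m S Z" and b1: "base k1 R1 m S" and b2: "base k2 R2 m S"
  shows False
proof -
  have m: "1 \<le> m" "k1 + 2 \<le> m" using I2D1[OF A] I2D3[OF A] by auto
  have W: "lev (m - 1) - R2 \<subseteq> lev (m - 1)" by blast
  have "R1 \<in> {lev (m - 1), S, lev (m - 1) - R2}" using I2D4[OF A] I3D6[OF B] by (metis insertI1 insertI2)
  from levmem[OF this baseD(1,2)[OF b1] order_refl baseD(3)[OF b1] W]
  have D: "(R1 = lev (m - 1) \<and> k1 = m - 1) \<or> (R1 = S \<and> k1 = m) \<or> (R1 = lev (m - 1) - R2 \<and> k1 = m - 1)" .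
  moreover have "k1 \<noteq> m - 1" "k1 \<noteq> m" using m by simp_all
  ultimately show False by blast
qed

lemma notin4:
  assumes A: "I4 k2 R2 m S Z" and b2: "base k2 R2 m S"
  shows "lev (m - 1) \<notin> Z"
proof
  assume X: "lev (m - 1) \<in> Z"
  have m: "2 \<le> m" "k2 + 1 = m" using I4D1[OF A] I4D3[OF A] by auto
  have Rn: "R2 \<noteq> lev (m - 1)" using I4D4[OF A] m by auto
  have L: "lev (m - 1) \<noteq> {}" using lev_ne'[OF baseD(3,4)[OF b2], of "m - 1"] by simp
  have "lev (m - 1) \<in> {lev (m - 2), R2, S}" using X I4D6[OF A] by simp
  from levmem[OF this order_refl L order_refl baseD(1)[OF b2] baseD(3)[OF b2]]
  have D: "(lev (m - 1) = lev (m - 2) \<and> m - 1 = m - 2) \<or> (lev (m - 1) = R2 \<and> m - 1 = k2) \<or>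
      (lev (m - 1) = S \<and> m - 1 = m)" by simp
  moreover have "m - 1 \<noteq> m - 2" "m - 1 \<noteq> m" using m by simp_all
  ultimately show False using Rn by blast
qed

lemma x14: "I1 k1 R1 m S Z \<Longrightarrow> I4 k2 R2 m S Z \<Longrightarrow> base k2 R2 m S \<Longrightarrow> False"
  using notin4 I1D5 by (metis insertI1)
lemma x24: "I2 k1 R1 m S Z \<Longrightarrow> I4 k2 R2 m S Z \<Longrightarrow> base k2 R2 m S \<Longrightarrow> False"
  using notin4 I2D4 by (metis insertI1)
lemma x34: "I3 k1 R1 m S Z \<Longrightarrow> I4 k2 R2 m S Z \<Longrightarrow> base k2 R2 m S \<Longrightarrow> False"
  using notin4 I3D6 by (metis insertI1)

lemma x5: "I5 k1 R1 m S Z \<Longrightarrow> I1 k2 R2 m S Z \<or> I2 k2 R2 m S Z \<or> I3 k2 R2 m S Z \<or> I4 k2 R2 m S Z \<Longrightarrow> False"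
  using I1D2[of k2 R2 m S Z] I2D2[of k2 R2 m S Z] I3D2[of k2 R2 m S Z] I4D2[of k2 R2 m S Z] I5D4[of k1 R1 m S Z]
  by linarith

end

context wr begin

lemma Img_R:
  assumes A: "Img k1 R1 m S Z" and B: "Img k2 R2 m S Z"
  shows "R1 = R2"
proof -
  have b1: "base k1 R1 m S" and b2: "base k2 R2 m S" using A B unfolding Img_def by simp_all
  have c1: "I1 k1 R1 m S Z \<or> I2 k1 R1 m S Z \<or> I3 k1 R1 m S Z \<or> I4 k1 R1 m S Z \<or> I5 k1 R1 m S Z"
    using A unfolding Img_def by simp
  have c2: "I1 k2 R2 m S Z \<or> I2 k2 R2 m S Z \<or> I3 k2 R2 m S Z \<or> I4 k2 R2 m S Z \<or> I5 k2 R2 m S Z"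
    using B unfolding Img_def by simp
  show ?thesis
    using c1
  proof (elim disjE)
    assume a: "I1 k1 R1 m S Z"
    show ?thesis using c2
    proof (elim disjE)
      assume c: "I1 k2 R2 m S Z"
      show ?thesis by (rule inj11[OF a c b1 b2])
    next
      assume c: "I2 k2 R2 m S Z"
      show ?thesis using x12[OF a c b1 b2] by blast
    next
      assume c: "I3 k2 R2 m S Z"
      show ?thesis using x13[OF a c b1 b2] by blast
    next
      assume c: "I4 k2 R2 m S Z"
      show ?thesis using x14[OF a c b2] by blast
    next
      assume c: "I5 k2 R2 m S Z"
      show ?thesis using x5[of k2 R2 m S Z k1 R1] a c by blast
    qed
  next
    assume a: "I2 k1 R1 m S Z"
    show ?thesis using c2
    proof (elim disjE)
      assume c: "I1 k2 R2 m S Z"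
      show ?thesis using x12[OF c a b2 b1] by blast
    next
      assume c: "I2 k2 R2 m S Z"
      show ?thesis by (rule inj22[OF a c b1 b2])
    next
      assume c: "I3 k2 R2 m S Z"
      show ?thesis using x23[OF a c b1 b2] by blast
    next
      assume c: "I4 k2 R2 m S Z"
      show ?thesis using x24[OF a c b2] by blast
    next
      assume c: "I5 k2 R2 m S Z"
      show ?thesis using x5[of k2 R2 m S Z k1 R1] a c by blast
    qed
  next
    assume a: "I3 k1 R1 m S Z"
    show ?thesis using c2
    proof (elim disjE)
      assume c: "I1 k2 R2 m S Z"
      show ?thesis using x13[OF c a b2 b1] by blast
    next
      assume c: "I2 k2 R2 m S Z"
      show ?thesis using x23[OF c a b2 b1] by blast
    next
      assume c: "I3 k2 R2 m S Z"
      show ?thesis by (rule inj33[OF a c b1 b2])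
    next
      assume c: "I4 k2 R2 m S Z"
      show ?thesis using x34[OF a c b2] by blast
    next
      assume c: "I5 k2 R2 m S Z"
      show ?thesis using x5[of k2 R2 m S Z k1 R1] a c by blast
    qed
  next
    assume a: "I4 k1 R1 m S Z"
    show ?thesis using c2
    proof (elim disjE)
      assume c: "I1 k2 R2 m S Z"
      show ?thesis using x14[OF c a b1] by blast
    next
      assume c: "I2 k2 R2 m S Z"
      show ?thesis using x24[OF c a b1] by blast
    next
      assume c: "I3 k2 R2 m S Z"
      show ?thesis using x34[OF c a b1] by blast
    next
      assume c: "I4 k2 R2 m S Z"
      show ?thesis by (rule inj44[OF a c b1 b2])
    next
      assume c: "I5 k2 R2 m S Z"
      show ?thesis using x5[of k2 R2 m S Z k1 R1] a c by blast
    qed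
  next
    assume a: "I5 k1 R1 m S Z"
    show ?thesis using c2
    proof (elim disjE)
      assume c: "I1 k2 R2 m S Z"
      show ?thesis using x5[of k1 R1 m S Z k2 R2] a c by blast
    next
      assume c: "I2 k2 R2 m S Z"
      show ?thesis using x5[of k1 R1 m S Z k2 R2] a c by blast
    next
      assume c: "I3 k2 R2 m S Z"
      show ?thesis using x5[of k1 R1 m S Z k2 R2] a c by blast
    next
      assume c: "I4 k2 R2 m S Z"
      show ?thesis using x5[of k1 R1 m S Z k2 R2] a c by blast
    next
      assume c: "I5 k2 R2 m S Z"
      show ?thesis by (rule inj55[OF a c b1 b2])
    qed
  qed
qed

lemma Img_inj:
  assumes A: "Img k1 R1 m1 S1 Z" and B: "Img k2 R2 m2 S2 Z"
  shows "{{}, low k1 \<union> R1, low m1 \<union> S1} = {{}, low k2 \<union> R2, low m2 \<union> S2}"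
proof -
  have "S1 = S2 \<and> m1 = m2" using TopP_unique[OF Img_top[OF A] Img_top[OF B]] .
  hence e: "S1 = S2" "m1 = m2" by auto
  have B': "Img k2 R2 m1 S1 Z" using B e by simp
  have R: "R1 = R2" using Img_R[OF A B'] .
  have "R1 \<subseteq> lev k1" "R1 \<noteq> {}" "R2 \<subseteq> lev k2" using A B unfolding Img_def base_def by simp_all
  hence "k1 = k2" using R lev_same by blast
  thus ?thesis using R e by simp
qed

lemma main_wr: "card (Deltastar_O :: 'n set set set) \<le> card (Deltastar_C :: 'n set set set)"
proof -
  define P where "P T Z \<longleftrightarrow> (\<exists>k R m S. T = {{}, low k \<union> R, low m \<union> S} \<and> Img k R m S Z)" for T Z
  define f where "f T = (SOME Z. P T Z)" for T
  have fP: "P T (f T)" if "T \<in> Deltastar_O" for T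
  proof -
    have "\<exists>Z. P T Z" using DO_img[OF that] unfolding P_def by blast
    thus ?thesis unfolding f_def by (rule someI_ex)
  qed
  have img: "f ` Deltastar_O \<subseteq> Deltastar_C"
  proof
    fix Z assume "Z \<in> f ` Deltastar_O"
    then obtain T where T: "T \<in> Deltastar_O" "Z = f T" by blast
    from fP[OF T(1)] obtain k R m S where "Img k R m S (f T)" unfolding P_def by blast
    thus "Z \<in> Deltastar_C" using Img_in T(2) by simp
  qed
  have inj: "inj_on f Deltastar_O"
  proof (rule inj_onI)
    fix T1 T2 assume T1: "T1 \<in> Deltastar_O" and T2: "T2 \<in> Deltastar_O" and e: "f T1 = f T2"
    from fP[OF T1] obtain k1 R1 m1 S1 where a: "T1 = {{}, low k1 \<union> R1, low m1 \<union> S1}" "Img k1 R1 m1 S1 (f T1)"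
      unfolding P_def by blast
    from fP[OF T2] obtain k2 R2 m2 S2 where b: "T2 = {{}, low k2 \<union> R2, low m2 \<union> S2}" "Img k2 R2 m2 S2 (f T2)"
      unfolding P_def by blast
    have "Img k2 R2 m2 S2 (f T1)" using b(2) e by simp
    from Img_inj[OF a(2) this] show "T1 = T2" using a(1) b(1) by simp
  qed
  have fin: "finite (Deltastar_C :: 'n set set set)" by simp
  show ?thesis by (rule card_inj_on_le[OF inj img fin])
qed

end

theorem lemma3p4:
  assumes "maximal_ranked TYPE('n::{finite,order})"
  shows "card (Deltastar_O :: 'n set set set) \<le> card (Deltastar_C :: 'n set set set)"
proof -
  interpret wr "poset_rank :: 'n \<Rightarrow> nat"
  proof
    show "(x::'n) < y \<longleftrightarrow> poset_rank x < poset_rank y" for x y using mr_less_iff[OF assms] .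
    show "0 < poset_rank x \<Longrightarrow> \<exists>y::'n. poset_rank y = poset_rank x - 1" for x :: 'n using rank_contig by blast
  qed
  show ?thesis by (rule main_wr)
qed

end
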